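(* In the setting below, for $p$ in the region of the $z$-plane outside the two loops of $C$, $$\frac{\partial f_{r,s}}{\partial r}(p)=A\left(\frac{p^2-s}{p^2-r}\right)^{1/2},\qquad A=-\frac1{8\pi i}\int_C\frac{z\,\phi(z)\,dz}{(z^2-r)^{3/2}(z^2-s)^{1/2}},$$ and symmetrically $$\frac{\partial f_{r,s}}{\partial s}(p)=B\left(\frac{p^2-r}{p^2-s}\right)^{1/2},\qquad B=-\frac1{8\pi i}\int_C\frac{z\,\phi(z)\,dz}{(z^2-r)^{1/2}(z^2-s)^{3/2}},$$ with square roots taken on the branches consistent with those used in $\alpha(p)$.
   Context: Setting: $z$ is a global coordinate on $\mathbb P^1$; $\phi$ is a holomorphic $\mathbb C^2$-valued function on a disc $N_0$ about $0$ and a disc $N_\infty$ about $\infty$ with $\phi(-z)=-\phi(z)$. For parameters $r$ near $0$ and $s$ near $\infty$ ($r\ne0$, $s\ne\infty$, $r\ne s$) with $\pm\sqrt r\in N_0$, $\pm\sqrt s\in N_\infty$, let $C$ be a fixed contour with two components, a loop in $N_0$ encircling a cut from $\sqrt r$ to $-\sqrt r$ and a loop in $N_\infty$ encircling a cut from $\sqrt s$ to $-\sqrt s$ (the loops stay fixed while $r,s$ vary slightly). Define $$\alpha(p)=\frac{dz}{z-p}\sqrt{\frac{(p^2-r)(p^2-s)}{(z^2-r)(z^2-s)}}\qquad\text{and}\qquad f_{r,s}(p)=\frac1{4\pi i}\int_C\phi(z)\,\alpha(p)$$ for $p$ outside the loops ($\alpha(p)$ is the meromorphic $1$-form on the elliptic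 curve $w^2=(z^2-r)(z^2-s)$ with simple poles of residue $\pm1$ at the two points over $p$). *)

theory Defs
  imports "HOL-Complex_Analysis.Complex_Analysis"
begin

definition cut0 :: "complex \<Rightarrow> complex set" where
  "cut0 r = closed_segment (csqrt r) (- csqrt r)"

text \<open>The cut from sqrt s to - sqrt s passing through infinity: the two rays
  of the line through 0 and sqrt s going from +-sqrt s out to infinity.\<close>
definition cutinf :: "complex \<Rightarrow> complex set" where
  "cutinf s = {complex_of_real t * csqrt s | t. 1 \<le> \<bar>t\<bar>}"

definition branch_dom :: "complex \<Rightarrow> complex \<Rightarrow> complex set" where
  "branch_dom r s = - (cut0 r \<union> cutinf s)"

text \<open>A single-valued branch w of sqrt((z^2-r)(z^2-s)) off the cuts
  (i.e. the coordinate w of the elliptic curve w^2=(z^2-r)(z^2-s)).\<close>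
definition is_sqrt_branch :: "complex \<Rightarrow> complex \<Rightarrow> (complex \<Rightarrow> complex) \<Rightarrow> bool" where
  "is_sqrt_branch r s w \<longleftrightarrow> w holomorphic_on branch_dom r s \<and>
     (\<forall>z\<in>branch_dom r s. (w z)^2 = (z^2 - r) * (z^2 - s))"

definition wbr :: "complex \<Rightarrow> complex \<Rightarrow> complex \<Rightarrow> complex" where
  "wbr r s = (SOME w. is_sqrt_branch r s w)"

text \<open>alpha(p) = alpha_coeff r s p z dz, i.e.
  dz/(z-p) * sqrt((p^2-r)(p^2-s)/((z^2-r)(z^2-s))), both roots on the same branch.\<close>
definition alpha_coeff :: "complex \<Rightarrow> complex \<Rightarrow> complex \<Rightarrow> complex \<Rightarrow> complex" where
  "alpha_coeff r s p z = wbr r s p / ((z - p) * wbr r s z)"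

definition cint :: "(real \<Rightarrow> complex) \<Rightarrow> (real \<Rightarrow> complex) \<Rightarrow> (complex \<Rightarrow> complex) \<Rightarrow> complex" where
  "cint \<gamma>0 \<gamma>1 g = contour_integral \<gamma>0 g + contour_integral \<gamma>1 g"

text \<open>f_{r,s}(p) = 1/(4 pi i) int_C phi alpha(p); phi is C^2-valued, modelled as a pair,
  and the integral is taken componentwise.\<close>
definition f_rs :: "(complex \<Rightarrow> complex \<times> complex) \<Rightarrow> (real \<Rightarrow> complex) \<Rightarrow> (real \<Rightarrow> complex)
    \<Rightarrow> complex \<Rightarrow> complex \<Rightarrow> complex \<Rightarrow> complex \<times> complex" where
  "f_rs \<phi> \<gamma>0 \<gamma>1 r s p =
     (1 / (4 * pi * \<i>) * cint \<gamma>0 \<gamma>1 (\<lambda>z. fst (\<phi> z) * alpha_coeff r s p z),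
      1 / (4 * pi * \<i>) * cint \<gamma>0 \<gamma>1 (\<lambda>z. snd (\<phi> z) * alpha_coeff r s p z))"

text \<open>A = -1/(8 pi i) int_C z phi(z) dz / ((z^2-r)^(3/2) (z^2-s)^(1/2)),
  where (z^2-r)^(3/2)(z^2-s)^(1/2) = (z^2-r) w(z) on the branch w used in alpha.\<close>
definition A_coef :: "(complex \<Rightarrow> complex \<times> complex) \<Rightarrow> (real \<Rightarrow> complex) \<Rightarrow> (real \<Rightarrow> complex)
    \<Rightarrow> complex \<Rightarrow> complex \<Rightarrow> complex \<times> complex" where
  "A_coef \<phi> \<gamma>0 \<gamma>1 r s =
     (- 1 / (8 * pi * \<i>) * cint \<gamma>0 \<gamma>1 (\<lambda>z. z * fst (\<phi> z) / ((z^2 - r) * wbr r s z)),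
      - 1 / (8 * pi * \<i>) * cint \<gamma>0 \<gamma>1 (\<lambda>z. z * snd (\<phi> z) / ((z^2 - r) * wbr r s z)))"

definition B_coef :: "(complex \<Rightarrow> complex \<times> complex) \<Rightarrow> (real \<Rightarrow> complex) \<Rightarrow> (real \<Rightarrow> complex)
    \<Rightarrow> complex \<Rightarrow> complex \<Rightarrow> complex \<times> complex" where
  "B_coef \<phi> \<gamma>0 \<gamma>1 r s =
     (- 1 / (8 * pi * \<i>) * cint \<gamma>0 \<gamma>1 (\<lambda>z. z * fst (\<phi> z) / ((z^2 - s) * wbr r s z)),
      - 1 / (8 * pi * \<i>) * cint \<gamma>0 \<gamma>1 (\<lambda>z. z * snd (\<phi> z) / ((z^2 - s) * wbr r s z)))"

end

theory Submission
  imports Defs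
begin

lemma sq_real_pos:
  fixes u :: complex and x :: real
  assumes "u^2 = complex_of_real x" "0 < x"
  shows "u = complex_of_real (Re u)"
proof -
  have "Re (u^2) = x" "Im (u^2) = 0" using assms by simp_all
  then have 1: "Re u ^2 - Im u ^2 = x" and 2: "Re u = 0 \<or> Im u = 0"
    by (auto simp add: power2_eq_square)
  have "Im u = 0"
  proof (rule ccontr)
    assume "Im u \<noteq> 0"
    then have "Re u = 0" using 2 by simp
    then have "(Im u)^2 = - x" using 1 by simp
    moreover have "(Im u)^2 \<ge> 0" by simp
    ultimately show False using assms(2) by linarith
  qed
  then show ?thesis by (simp add: complex_eq_iff)
qed

lemma cut0_iff: "z \<in> cut0 r \<longleftrightarrow> (\<exists>l::real. \<bar>l\<bar> \<le> 1 \<and> z = complex_of_real l * csqrt r)"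
proof
  assume "z \<in> cut0 r"
  then obtain u::real where u: "0 \<le> u" "u \<le> 1" "z = (1 - u) *\<^sub>R csqrt r + u *\<^sub>R (- csqrt r)"
    unfolding cut0_def closed_segment_def by auto
  have "z = complex_of_real (1 - 2*u) * csqrt r"
    using u(3) by (simp add: scaleR_conv_of_real algebra_simps)
  moreover have "\<bar>1 - 2*u\<bar> \<le> 1" using u by auto
  ultimately show "\<exists>l::real. \<bar>l\<bar> \<le> 1 \<and> z = complex_of_real l * csqrt r" by blast
next
  assume "\<exists>l::real. \<bar>l\<bar> \<le> 1 \<and> z = complex_of_real l * csqrt r"
  then obtain l::real where l: "\<bar>l\<bar> \<le> 1" "z = complex_of_real l * csqrt r" by blast
  define u where "u = (1 - l) / 2"
  have "0 \<le> u" "u \<le> 1" using l by (auto simp: u_def)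
  have "(1 - u) *\<^sub>R csqrt r + u *\<^sub>R (- csqrt r) = complex_of_real (1 - 2*u) * csqrt r"
    by (simp add: scaleR_conv_of_real algebra_simps)
  moreover have "1 - 2*u = l" by (simp add: u_def field_simps)
  ultimately have "z = (1 - u) *\<^sub>R csqrt r + u *\<^sub>R (- csqrt r)"
    using l(2) by simp
  with \<open>0 \<le> u\<close> \<open>u \<le> 1\<close> show "z \<in> cut0 r" unfolding cut0_def closed_segment_def by blast
qed

lemma cutinf_iff: "z \<in> cutinf s \<longleftrightarrow> (\<exists>t::real. 1 \<le> \<bar>t\<bar> \<and> z = complex_of_real t * csqrt s)"
  unfolding cutinf_def by blast

lemma cut0_iff2: "z \<in> cut0 r \<longleftrightarrow> z = 0 \<or> 1 - r / z^2 \<in> \<real>\<^sub>\<le>\<^sub>0"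
proof
  assume "z \<in> cut0 r"
  then obtain l::real where l: "\<bar>l\<bar> \<le> 1" "z = complex_of_real l * csqrt r" by (auto simp: cut0_iff)
  show "z = 0 \<or> 1 - r / z^2 \<in> \<real>\<^sub>\<le>\<^sub>0"
  proof (cases "z = 0")
    case False
    then have "l \<noteq> 0" "csqrt r \<noteq> 0" using l by auto
    have "z^2 = complex_of_real (l^2) * r"
      using l(2) by (simp add: power_mult_distrib)
    moreover have "r \<noteq> 0" using \<open>csqrt r \<noteq> 0\<close> by auto
    ultimately have "r / z^2 = complex_of_real (1 / l^2)"
      using \<open>l \<noteq> 0\<close> by (simp add: divide_simps)
    moreover have "1 / l^2 \<ge> 1" using l \<open>l \<noteq> 0\<close>
      by (simp add: abs_square_le_1)
    ultimately show ?thesis by (auto simp: complex_nonpos_Reals_iff)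
  qed simp
next
  assume A: "z = 0 \<or> 1 - r / z^2 \<in> \<real>\<^sub>\<le>\<^sub>0"
  show "z \<in> cut0 r"
  proof (cases "z = 0")
    case True
    then show ?thesis by (auto simp: cut0_iff intro!: exI[of _ 0])
  next
    case False
    then have B: "1 - r / z^2 \<in> \<real>\<^sub>\<le>\<^sub>0" using A by simp
    define x where "x = Re (1 - r/z^2)"
    have x: "1 - r/z^2 = complex_of_real x" "x \<le> 0" using B
      by (auto simp: complex_nonpos_Reals_iff x_def complex_eq_iff)
    have "(csqrt r / z)^2 = complex_of_real (1 - x)"
      using x(1) by (simp add: power_divide algebra_simps)
    then have m0: "csqrt r / z = complex_of_real (Re (csqrt r / z))"
      using sq_real_pos x(2) by (metis diff_gt_0_iff_gt le_less_trans zero_less_one)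
    obtain m where m: "csqrt r / z = complex_of_real m" using m0 by blast
    have "m^2 = 1 - x"
    proof -
      have "complex_of_real (m^2) = complex_of_real (1 - x)"
        using \<open>(csqrt r / z)^2 = _\<close> m by (metis of_real_power)
      then show ?thesis by (simp only: of_real_eq_iff)
    qed
    then have "1 \<le> \<bar>m\<bar>" using x(2)
      by (metis power2_nonneg_ge_1_iff power2_abs abs_ge_zero diff_zero diff_left_mono)
    then have "m \<noteq> 0" by auto
    have "z = complex_of_real (1/m) * csqrt r"
      using m False \<open>m \<noteq> 0\<close> by (simp add: field_simps)
    moreover have "\<bar>1/m\<bar> \<le> 1" using \<open>1 \<le> \<bar>m\<bar>\<close> by simp
    ultimately show ?thesis unfolding cut0_iff by blast
  qed
qed

lemma cutinf_iff2:
  assumes "s \<noteq> 0"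
  shows "z \<in> cutinf s \<longleftrightarrow> 1 - z^2 / s \<in> \<real>\<^sub>\<le>\<^sub>0"
proof
  assume "z \<in> cutinf s"
  then obtain t::real where t: "1 \<le> \<bar>t\<bar>" "z = complex_of_real t * csqrt s" by (auto simp: cutinf_iff)
  have "z^2 = complex_of_real (t^2) * s" using t(2) by (simp add: power_mult_distrib)
  then have "1 - z^2 / s = complex_of_real (1 - t^2)" using assms by simp
  moreover have "1 \<le> \<bar>t\<bar>^2" using t(1) by (rule one_le_power)
  then have "1 - t^2 \<le> 0" by simp
  ultimately show "1 - z^2 / s \<in> \<real>\<^sub>\<le>\<^sub>0" by (simp add: complex_nonpos_Reals_iff)
next
  assume B: "1 - z^2 / s \<in> \<real>\<^sub>\<le>\<^sub>0"
  define x where "x = Re (1 - z^2/s)"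
  have x: "1 - z^2/s = complex_of_real x" "x \<le> 0" using B
    by (auto simp: complex_nonpos_Reals_iff x_def complex_eq_iff)
  have cs: "csqrt s \<noteq> 0" using assms by simp
  have "(z / csqrt s)^2 = complex_of_real (1 - x)"
    using x(1) by (simp add: power_divide algebra_simps)
  then have m0: "z / csqrt s = complex_of_real (Re (z / csqrt s))"
    using sq_real_pos x(2) by (metis diff_gt_0_iff_gt le_less_trans zero_less_one)
  obtain m where m: "z / csqrt s = complex_of_real m" using m0 by blast
  have "m^2 = 1 - x"
  proof -
    have "complex_of_real (m^2) = complex_of_real (1 - x)"
      using \<open>(z / csqrt s)^2 = _\<close> m by (metis of_real_power)
    then show ?thesis by (simp only: of_real_eq_iff)
  qed
  then have "1 \<le> \<bar>m\<bar>" using x(2)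
    by (metis power2_nonneg_ge_1_iff power2_abs abs_ge_zero diff_zero diff_left_mono)
  moreover have "z = complex_of_real m * csqrt s"
    using m cs by (simp add: field_simps)
  ultimately show "z \<in> cutinf s" unfolding cutinf_iff by blast
qed

lemma cut0_uminus: "- z \<in> cut0 r \<longleftrightarrow> z \<in> cut0 r"
  by (simp add: cut0_iff2)

lemma cutinf_uminus: "- z \<in> cutinf s \<longleftrightarrow> z \<in> cutinf s"
  unfolding cutinf_iff
  by (metis (no_types, opaque_lifting) abs_minus_cancel minus_minus minus_mult_left of_real_minus)

lemma bd_uminus: "- z \<in> branch_dom r s \<longleftrightarrow> z \<in> branch_dom r s"
  by (simp add: branch_dom_def cut0_uminus cutinf_uminus)

lemma bd_nonzero:
  assumes "z \<in> branch_dom r s"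
  shows "z \<noteq> 0" "1 - r / z^2 \<notin> \<real>\<^sub>\<le>\<^sub>0"
  using assms by (auto simp: branch_dom_def cut0_iff2)

lemma bd_nonzero2:
  assumes "z \<in> branch_dom r s" "s \<noteq> 0"
  shows "1 - z^2 / s \<notin> \<real>\<^sub>\<le>\<^sub>0"
  using assms by (auto simp: branch_dom_def cutinf_iff2)

lemma bd_F_nonzero:
  assumes "z \<in> branch_dom r s" "s \<noteq> 0"
  shows "z^2 \<noteq> r" "z^2 \<noteq> s"
proof -
  show "z^2 \<noteq> r"
  proof
    assume h: "z^2 = r"
    have nz: "z^2 \<noteq> 0" using bd_nonzero(1)[OF assms(1)] by simp
    then have "r \<noteq> 0" using h by simp
    then have "1 - r / z^2 = 0" using h by simp
    then show False using bd_nonzero(2)[OF assms(1)] by simp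
  qed
  show "z^2 \<noteq> s"
  proof
    assume "z^2 = s"
    then have "1 - z^2 / s = 0" using assms(2) by simp
    then show False using bd_nonzero2[OF assms] by simp
  qed
qed

lemma closed_cut0: "closed (cut0 r)"
  unfolding cut0_def by (simp add: closed_segment)

lemma closed_cutinf:
  assumes "s \<noteq> 0" shows "closed (cutinf s)"
proof -
  have "cutinf s = (\<lambda>z. 1 - z^2 / s) -` \<real>\<^sub>\<le>\<^sub>0"
    using cutinf_iff2[OF assms] by auto
  moreover have "closed ((\<lambda>z. 1 - z^2 / s) -` \<real>\<^sub>\<le>\<^sub>0)"
    using assms by (intro closed_vimage continuous_intros) (auto intro: closed_nonpos_Reals_complex)
  ultimately show ?thesis by simp
qed

lemma open_bd:
  assumes "s \<noteq> 0" shows "open (branch_dom r s)"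
  unfolding branch_dom_def using closed_cut0 closed_cutinf[OF assms]
  by (auto intro!: open_Int open_Compl)

definition S1 :: "complex \<Rightarrow> complex \<Rightarrow> complex" where
  "S1 r z = csqrt (1 - r / z^2)"
definition S2 :: "complex \<Rightarrow> complex \<Rightarrow> complex" where
  "S2 s z = csqrt (1 - z^2 / s)"
definition W :: "complex \<Rightarrow> complex \<Rightarrow> complex \<Rightarrow> complex" where
  "W r s z = csqrt (- s) * z * S1 r z * S2 s z"

lemma W_hol:
  assumes "s \<noteq> 0" shows "W r s holomorphic_on branch_dom r s"
  unfolding W_def S1_def S2_def
  using bd_nonzero bd_nonzero2 assms
  by (intro holomorphic_intros) auto

lemma W_sq:
  assumes "s \<noteq> 0" "z \<in> branch_dom r s"
  shows "(W r s z)^2 = (z^2 - r) * (z^2 - s)"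
proof -
  have z: "z \<noteq> 0" using bd_nonzero assms by auto
  have "(W r s z)^2 = (- s) * z^2 * (1 - r / z^2) * (1 - z^2 / s)"
    unfolding W_def S1_def S2_def by (simp add: power_mult_distrib)
  also have "\<dots> = (z^2 - r) * (z^2 - s)"
    using z assms(1) by (simp add: field_simps)
  finally show ?thesis .
qed

lemma W_nonzero:
  assumes "s \<noteq> 0" "z \<in> branch_dom r s"
  shows "W r s z \<noteq> 0"
  using W_sq[OF assms] bd_F_nonzero[OF assms(2,1)] by (metis mult_eq_0_iff power_zero_numeral right_minus_eq)

lemma W_odd: "W r s (- z) = - W r s z"
  unfolding W_def S1_def S2_def by simp

lemma W_branch:
  assumes "s \<noteq> 0" shows "is_sqrt_branch r s (W r s)"
  unfolding is_sqrt_branch_def using W_hol W_sq assms by blast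

lemma wbr_branch:
  assumes "s \<noteq> 0" shows "is_sqrt_branch r s (wbr r s)"
  unfolding wbr_def by (rule someI[of "is_sqrt_branch r s" "W r s"]) (rule W_branch[OF assms])

lemma seg_scale:
  fixes z :: complex
  assumes "x \<in> closed_segment z (complex_of_real k0 * z)"
  shows "\<exists>k. x = complex_of_real k * z \<and> min 1 k0 \<le> k \<and> k \<le> max 1 k0"
proof -
  obtain u::real where u: "0 \<le> u" "u \<le> 1" "x = (1 - u) *\<^sub>R z + u *\<^sub>R (complex_of_real k0 * z)"
    using assms unfolding closed_segment_def by auto
  have "x = complex_of_real (1 - u + u * k0) * z"
    using u(3) by (simp add: scaleR_conv_of_real algebra_simps)
  moreover have "min 1 k0 \<le> 1 - u + u * k0 \<and> 1 - u + u * k0 \<le> max 1 k0"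
  proof (cases "1 \<le> k0")
    case True
    have "0 \<le> u * (k0 - 1)" "u * (k0 - 1) \<le> k0 - 1"
      using u True by (auto intro: mult_left_le_one_le)
    then show ?thesis using True by (auto simp: algebra_simps)
  next
    case False
    have "0 \<le> u * (1 - k0)" "u * (1 - k0) \<le> 1 - k0"
      using u False by (auto intro: mult_left_le_one_le)
    then show ?thesis using False by (auto simp: algebra_simps)
  qed
  ultimately show ?thesis by blast
qed

lemma bd_connected:
  assumes s: "s \<noteq> 0" and c1: "norm (csqrt r) < c" and c2: "c < norm (csqrt s)" and cI: "c \<in> I"
    and I: "\<And>x y t. x \<in> I \<Longrightarrow> y \<in> I \<Longrightarrow> x \<le> t \<Longrightarrow> t \<le> y \<Longrightarrow> t \<in> I"
  shows "connected ({z. norm z \<in> I} \<inter> branch_dom r s)"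
proof -
  define \<Omega> where "\<Omega> = {z. norm z \<in> I} \<inter> branch_dom r s"
  define C where "C = sphere (0::complex) c"
  have c0: "0 < c" using c1 by (smt (verit) norm_ge_zero)
  have C\<Omega>: "C \<subseteq> \<Omega>"
  proof
    fix z assume "z \<in> C"
    then have nz: "norm z = c" by (simp add: C_def)
    have "z \<notin> cut0 r"
    proof
      assume "z \<in> cut0 r"
      then obtain l::real where "\<bar>l\<bar> \<le> 1" "z = complex_of_real l * csqrt r" by (auto simp: cut0_iff)
      then have "norm z \<le> norm (csqrt r)" by (simp add: norm_mult mult_left_le_one_le)
      then show False using nz c1 by simp
    qed
    moreover have "z \<notin> cutinf s"
    proof
      assume "z \<in> cutinf s"
      then obtain t::real where "1 \<le> \<bar>t\<bar>" "z = complex_of_real t * csqrt s" by (auto simp: cutinf_iff)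
      then have "norm z \<ge> norm (csqrt s)" by (simp add: norm_mult mult_le_cancel_right1)
      then show False using nz c2 by simp
    qed
    ultimately show "z \<in> \<Omega>" using nz cI by (simp add: \<Omega>_def branch_dom_def)
  qed
  define seg where "seg z = closed_segment z (complex_of_real (c / norm z) * z)" for z
  have seg\<Omega>: "seg z \<subseteq> \<Omega>" if z: "z \<in> \<Omega>" for z
  proof
    fix x assume "x \<in> seg z"
    then obtain k where k: "x = complex_of_real k * z" "min 1 (c / norm z) \<le> k" "k \<le> max 1 (c / norm z)"
      using seg_scale unfolding seg_def by blast
    have zI: "norm z \<in> I" and zc0: "z \<notin> cut0 r" and zci: "z \<notin> cutinf s"
      using z by (auto simp: \<Omega>_def branch_dom_def)
    have z0: "z \<noteq> 0" using zc0 by (auto simp: cut0_iff2)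
    then have nzp: "0 < norm z" by simp
    have kpos: "0 < k" using k(2) c0 nzp by (smt (verit) divide_pos_pos)
    have nx: "norm x = k * norm z" using k(1) kpos by (simp add: norm_mult)
    have kz: "min (norm z) c \<le> k * norm z \<and> k * norm z \<le> max (norm z) c"
    proof (cases "norm z \<le> c")
      case True
      then have "1 \<le> c / norm z" using nzp by simp
      then have "1 \<le> k" "k \<le> c / norm z" using k by auto
      then have "norm z \<le> k * norm z" "k * norm z \<le> c" using nzp
        by (auto simp: mult_le_cancel_right1 pos_le_divide_eq)
      then show ?thesis using True by simp
    next
      case False
      then have "c / norm z < 1" using nzp by simp
      then have "k \<le> 1" "c / norm z \<le> k" using k by auto
      then have "k * norm z \<le> norm z" "c \<le> k * norm z" using nzp
        by (auto simp: mult_le_cancel_right1 pos_divide_le_eq)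
      then show ?thesis using False by simp
    qed
    have "norm x \<in> I"
    proof (cases "norm z \<le> c")
      case True then show ?thesis using I[OF zI cI] kz nx by auto
    next
      case False then show ?thesis using I[OF cI zI] kz nx by auto
    qed
    moreover have "x \<notin> cut0 r"
    proof
      assume "x \<in> cut0 r"
      then obtain l::real where l: "\<bar>l\<bar> \<le> 1" "x = complex_of_real l * csqrt r" by (auto simp: cut0_iff)
      show False
      proof (cases "1 \<le> k")
        case True
        have "z = complex_of_real (l / k) * csqrt r" using l(2) k(1) kpos by (simp add: field_simps)
        moreover have "\<bar>l / k\<bar> \<le> 1" using True l(1) by (simp add: abs_div)
        ultimately have "z \<in> cut0 r" unfolding cut0_iff by blast
        then show False using zc0 by blast
      next
        case False
        then have "c / norm z \<le> k" using k(2) by auto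
        then have "c \<le> norm x" using nx nzp by (simp add: pos_divide_le_eq)
        moreover have "norm x \<le> norm (csqrt r)" using l by (simp add: norm_mult mult_left_le_one_le)
        ultimately show False using c1 by simp
      qed
    qed
    moreover have "x \<notin> cutinf s"
    proof
      assume "x \<in> cutinf s"
      then obtain t::real where t: "1 \<le> \<bar>t\<bar>" "x = complex_of_real t * csqrt s" by (auto simp: cutinf_iff)
      show False
      proof (cases "k \<le> 1")
        case True
        have "z = complex_of_real (t / k) * csqrt s" using t(2) k(1) kpos by (simp add: field_simps)
        moreover have "1 \<le> \<bar>t / k\<bar>" using True t(1) kpos by (simp add: abs_div)
        ultimately have "z \<in> cutinf s" unfolding cutinf_iff by blast
        then show False using zci by blast
      next
        case False
        then have "k \<le> c / norm z" using k(3) by auto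
        then have "norm x \<le> c" using nx nzp by (simp add: pos_le_divide_eq)
        moreover have "norm x \<ge> norm (csqrt s)" using t by (simp add: norm_mult mult_le_cancel_right1)
        ultimately show False using c2 by simp
      qed
    qed
    ultimately show "x \<in> \<Omega>" by (simp add: \<Omega>_def branch_dom_def)
  qed
  have eq: "\<Omega> = \<Union> ((\<lambda>z. seg z \<union> C) ` \<Omega>)"
  proof
    show "\<Omega> \<subseteq> \<Union> ((\<lambda>z. seg z \<union> C) ` \<Omega>)"
      by (auto simp: seg_def)
    show "\<Union> ((\<lambda>z. seg z \<union> C) ` \<Omega>) \<subseteq> \<Omega>" using seg\<Omega> C\<Omega> by blast
  qed
  have "connected (\<Union> ((\<lambda>z. seg z \<union> C) ` \<Omega>))"
  proof (rule connected_Union)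
    fix S assume "S \<in> (\<lambda>z. seg z \<union> C) ` \<Omega>"
    then obtain z where z: "z \<in> \<Omega>" "S = seg z \<union> C" by blast
    have z0: "z \<noteq> 0" using z(1) by (auto simp: \<Omega>_def branch_dom_def cut0_iff2)
    have "complex_of_real (c / norm z) * z \<in> seg z" by (simp add: seg_def)
    moreover have "complex_of_real (c / norm z) * z \<in> C" using z0 c0 by (simp add: C_def norm_mult norm_divide del: of_real_divide)
    ultimately have "seg z \<inter> C \<noteq> {}" by blast
    then show "connected S" unfolding z(2)
      by (intro connected_Un) (auto simp: seg_def C_def connected_sphere)
  next
    have "complex_of_real c \<in> C" using c0 by (simp add: C_def)
    then show "\<Inter> ((\<lambda>z. seg z \<union> C) ` \<Omega>) \<noteq> {}" by blast
  qed
  then show ?thesis using eq \<Omega>_def by simp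
qed

lemma sign_unique:
  fixes f g :: "complex \<Rightarrow> complex"
  assumes "connected U" "continuous_on U f" "continuous_on U g"
    and "\<And>z. z \<in> U \<Longrightarrow> (f z)^2 = (g z)^2" "\<And>z. z \<in> U \<Longrightarrow> g z \<noteq> 0"
  shows "\<exists>e. (e = 1 \<or> e = -1) \<and> (\<forall>z\<in>U. f z = e * g z)"
proof -
  have cont: "continuous_on U (\<lambda>z. f z / g z)"
    using assms by (intro continuous_intros) auto
  have r: "f z / g z \<in> {1, -1}" if "z \<in> U" for z
  proof -
    have "(f z / g z)^2 = 1" using assms(4,5)[OF that] by (simp add: power_divide)
    then show ?thesis by (simp add: power2_eq_1_iff)
  qed
  then have "finite ((\<lambda>z. f z / g z) ` U)" by (meson finite.emptyI finite_insert finite_subset image_subsetI)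
  then have "(\<lambda>z. f z / g z) constant_on U"
    using continuous_finite_range_constant[OF assms(1) cont] by blast
  then obtain e where e: "\<And>z. z \<in> U \<Longrightarrow> f z / g z = e" by (auto simp: constant_on_def)
  show ?thesis
  proof (cases "U = {}")
    case True then show ?thesis by auto
  next
    case False
    then obtain z0 where "z0 \<in> U" by blast
    then have "e = 1 \<or> e = -1" using r e by fastforce
    moreover have "\<forall>z\<in>U. f z = e * g z" using e assms(5) by (simp add: field_simps)
    ultimately show ?thesis by blast
  qed
qed

lemma norm_csqrt_lt:
  assumes "norm r < norm s" shows "norm (csqrt r) < norm (csqrt s)"
  using assms by simp

lemma wbr_W:
  assumes s: "s \<noteq> 0" and rs: "norm r < norm s"
  shows "\<exists>e. (e = 1 \<or> e = -1) \<and> (\<forall>z\<in>branch_dom r s. wbr r s z = e * W r s z)"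
proof -
  define c where "c = (norm (csqrt r) + norm (csqrt s)) / 2"
  have c: "norm (csqrt r) < c" "c < norm (csqrt s)" using norm_csqrt_lt[OF rs] by (auto simp: c_def)
  have "connected ({z. norm z \<in> UNIV} \<inter> branch_dom r s)"
    by (rule bd_connected[OF s c]) auto
  then have conn: "connected (branch_dom r s)" by simp
  have wb: "is_sqrt_branch r s (wbr r s)" by (rule wbr_branch[OF s])
  show ?thesis
  proof (rule sign_unique[OF conn])
    show "continuous_on (branch_dom r s) (wbr r s)"
      using wb holomorphic_on_imp_continuous_on by (auto simp: is_sqrt_branch_def)
    show "continuous_on (branch_dom r s) (W r s)"
      using W_hol[OF s] holomorphic_on_imp_continuous_on by blast
    show "(wbr r s z)^2 = (W r s z)^2" if "z \<in> branch_dom r s" for z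
      using wb that W_sq[OF s that] by (auto simp: is_sqrt_branch_def)
    show "W r s z \<noteq> 0" if "z \<in> branch_dom r s" for z
      using W_nonzero[OF s that] .
  qed
qed

definition Rt :: "complex \<Rightarrow> complex \<Rightarrow> complex \<Rightarrow> complex \<Rightarrow> complex" where
  "Rt r s p z = (p * S1 r p * S2 s p) / ((z - p) * (z * S1 r z * S2 s z))"

lemma alpha_Rt:
  assumes s: "s \<noteq> 0" and rs: "norm r < norm s" and p: "p \<in> branch_dom r s" and z: "z \<in> branch_dom r s"
  shows "alpha_coeff r s p z = Rt r s p z"
proof -
  obtain e where e: "e = 1 \<or> e = -1" "\<And>z. z \<in> branch_dom r s \<Longrightarrow> wbr r s z = e * W r s z"
    using wbr_W[OF s rs] by blast
  have k: "e * csqrt (- s) \<noteq> 0" using e(1) s by auto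
  have "alpha_coeff r s p z = ((e * csqrt (- s)) * (p * S1 r p * S2 s p)) /
      ((e * csqrt (- s)) * ((z - p) * (z * S1 r z * S2 s z)))"
    unfolding alpha_coeff_def e(2)[OF p] e(2)[OF z] W_def by (simp add: algebra_simps)
  also have "\<dots> = Rt r s p z"
    unfolding Rt_def by (rule mult_divide_mult_cancel_left[OF k])
  finally show ?thesis .
qed

lemma wbr_odd:
  assumes s: "s \<noteq> 0" and rs: "norm r < norm s" and z: "z \<in> branch_dom r s"
  shows "wbr r s (- z) = - wbr r s z"
proof -
  obtain e where e: "e = 1 \<or> e = -1" "\<And>z. z \<in> branch_dom r s \<Longrightarrow> wbr r s z = e * W r s z"
    using wbr_W[OF s rs] by blast
  have mz: "- z \<in> branch_dom r s" using z bd_uminus by blast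
  show ?thesis using e(2)[OF z] e(2)[OF mz] W_odd by simp
qed

lemma wbr_hol:
  assumes s: "s \<noteq> 0" shows "wbr r s holomorphic_on branch_dom r s"
  using wbr_branch[OF s] by (simp add: is_sqrt_branch_def)

lemma wbr_nonzero:
  assumes s: "s \<noteq> 0" and z: "z \<in> branch_dom r s"
  shows "wbr r s z \<noteq> 0"
proof
  assume "wbr r s z = 0"
  then have "(z^2 - r) * (z^2 - s) = 0" using wbr_branch[OF s, of r] z by (auto simp: is_sqrt_branch_def)
  then show False using bd_F_nonzero[OF z s] by simp
qed

lemma winding_negatepath:
  assumes "valid_path \<gamma>" "w \<notin> path_image (uminus \<circ> \<gamma>)"
  shows "winding_number (uminus \<circ> \<gamma>) w = winding_number \<gamma> (- w)"
proof -
  have w': "- w \<notin> path_image \<gamma>" using assms(2) unfolding path_image_compose by (metis image_eqI minus_minus)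
  have "winding_number (uminus \<circ> \<gamma>) w = 1/(2*pi*\<i>) * contour_integral (uminus \<circ> \<gamma>) (\<lambda>z. 1/(z - w))"
    using assms by (intro winding_number_valid_path) auto
  also have "\<dots> = 1/(2*pi*\<i>) * (- contour_integral \<gamma> (\<lambda>x. 1/(- x - w)))"
    using contour_integral_negatepath[OF assms(1)] by simp
  also have "- contour_integral \<gamma> (\<lambda>x. 1/(- x - w)) = contour_integral \<gamma> (\<lambda>x. 1/(x - (- w)))"
  proof -
    have "(\<lambda>x. 1/(x - (- w))) = (\<lambda>x. - (1/(- x - w)))"
    proof (rule ext)
      fix x :: complex
      have "- x - w = - (x - (- w))" by simp
      then show "1/(x - (- w)) = - (1/(- x - w))" by (simp only: divide_minus_right) simp
    qed
    then show ?thesis by (simp add: contour_integral_neg)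
  qed
  also have "1/(2*pi*\<i>) * contour_integral \<gamma> (\<lambda>x. 1/(x - (- w))) = winding_number \<gamma> (- w)"
    using assms(1) w' by (intro winding_number_valid_path[symmetric]) auto
  finally show ?thesis .
qed

lemma even_int_zero:
  assumes U: "open U" "connected U" and hol: "g holomorphic_on U"
    and sym: "\<And>z. z \<in> U \<Longrightarrow> - z \<in> U" and ev: "\<And>z. z \<in> U \<Longrightarrow> g (- z) = g z"
    and \<gamma>: "valid_path \<gamma>" "pathfinish \<gamma> = pathstart \<gamma>" "path_image \<gamma> \<subseteq> U"
    and wn: "\<And>w. w \<notin> U \<Longrightarrow> winding_number \<gamma> w = winding_number \<gamma> (- w)"
  shows "contour_integral \<gamma> g = 0"
proof -
  define x0 where "x0 = pathstart \<gamma>"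
  have x0: "x0 \<in> U" using \<gamma>(3) pathstart_in_path_image unfolding x0_def by blast
  obtain \<sigma> where \<sigma>: "polynomial_function \<sigma>" "path_image \<sigma> \<subseteq> U" "pathstart \<sigma> = x0" "pathfinish \<sigma> = - x0"
    using connected_open_polynomial_connected[OF U(1) U(2) x0 sym[OF x0]] by blast
  have v\<sigma>: "valid_path \<sigma>" using \<sigma>(1) valid_path_polynomial_function by blast
  define \<gamma>m where "\<gamma>m = uminus \<circ> \<gamma>"
  have vm: "valid_path \<gamma>m" using \<gamma>(1) by (simp add: \<gamma>m_def)
  have im: "path_image \<gamma>m \<subseteq> U" using \<gamma>(3) sym by (auto simp: \<gamma>m_def path_image_compose)
  have sm: "pathstart \<gamma>m = - x0" "pathfinish \<gamma>m = - x0"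
    using \<gamma>(2) by (auto simp: \<gamma>m_def x0_def pathstart_def pathfinish_def)
  define \<Gamma> where "\<Gamma> = \<gamma> +++ (\<sigma> +++ (reversepath \<gamma>m +++ reversepath \<sigma>))"
  have v\<Gamma>: "valid_path \<Gamma>" unfolding \<Gamma>_def
    using \<gamma> v\<sigma> vm \<sigma> sm by (intro valid_path_join) (auto simp: x0_def)
  have l\<Gamma>: "pathfinish \<Gamma> = pathstart \<Gamma>" unfolding \<Gamma>_def using \<sigma> by (simp add: x0_def)
  have i\<Gamma>: "path_image \<Gamma> \<subseteq> U" unfolding \<Gamma>_def
    using \<gamma>(3) \<sigma>(2) im path_image_join_subset by (smt (verit) path_image_reversepath subset_trans sup.boundedI)
  have "(g has_contour_integral 0) \<Gamma>"
  proof (rule Cauchy_theorem_global[OF U(1) hol v\<Gamma> l\<Gamma> i\<Gamma>])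
    fix w assume w: "w \<notin> U"
    have n1: "w \<notin> path_image \<gamma>" "w \<notin> path_image \<sigma>" "w \<notin> path_image \<gamma>m"
      using w \<gamma>(3) \<sigma>(2) im by auto
    have p: "path \<gamma>" "path \<sigma>" "path \<gamma>m" using \<gamma>(1) v\<sigma> vm valid_path_imp_path by auto
    have A: "winding_number (reversepath \<gamma>m +++ reversepath \<sigma>) w = - winding_number \<gamma>m w + - winding_number \<sigma> w"
      using n1 p \<sigma> sm by (simp add: winding_number_join winding_number_reversepath)
    have pA: "path (reversepath \<gamma>m +++ reversepath \<sigma>)" "w \<notin> path_image (reversepath \<gamma>m +++ reversepath \<sigma>)"
      using n1 p \<sigma> sm by (auto simp: not_in_path_image_join)
    have B: "winding_number (\<sigma> +++ (reversepath \<gamma>m +++ reversepath \<sigma>)) w = winding_number \<sigma> w + (- winding_number \<gamma>m w + - winding_number \<sigma> w)"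
      using n1 p \<sigma> sm pA A by (simp add: winding_number_join)
    have pB: "path (\<sigma> +++ (reversepath \<gamma>m +++ reversepath \<sigma>))" "w \<notin> path_image (\<sigma> +++ (reversepath \<gamma>m +++ reversepath \<sigma>))"
      using n1 p \<sigma> sm pA by (auto simp: not_in_path_image_join)
    have "winding_number \<Gamma> w = winding_number \<gamma> w + (winding_number \<sigma> w + (- winding_number \<gamma>m w + - winding_number \<sigma> w))"
      unfolding \<Gamma>_def using n1 p \<sigma> sm pB B \<gamma>(2) by (simp add: winding_number_join x0_def)
    also have "winding_number \<gamma>m w = winding_number \<gamma> (- w)"
      unfolding \<gamma>m_def using winding_negatepath \<gamma>(1) n1(3) \<gamma>m_def by blast
    finally show "winding_number \<Gamma> w = 0" using wn[OF w] by simp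
  qed
  then have I0: "contour_integral \<Gamma> g = 0" using contour_integral_unique by blast
  have ci: "g contour_integrable_on \<gamma>" "g contour_integrable_on \<sigma>" "g contour_integrable_on \<gamma>m"
    using contour_integrable_holomorphic_simple[OF hol U(1)] \<gamma> v\<sigma> \<sigma>(2) vm im by auto
  have ci': "g contour_integrable_on (reversepath \<gamma>m)" "g contour_integrable_on (reversepath \<sigma>)"
    using contour_integrable_reversepath ci vm v\<sigma> by auto
  have "contour_integral \<Gamma> g = contour_integral \<gamma> g + (contour_integral \<sigma> g + (- contour_integral \<gamma>m g + - contour_integral \<sigma> g))"
    unfolding \<Gamma>_def using ci ci' \<gamma>(1) v\<sigma> vm \<sigma> sm
    by (simp add: contour_integral_reversepath contour_integrable_joinI valid_path_join x0_def)
  moreover have "contour_integral \<gamma>m g = - contour_integral \<gamma> g"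
  proof -
    have "contour_integral \<gamma>m g = - contour_integral \<gamma> (\<lambda>x. g (- x))"
      unfolding \<gamma>m_def by (rule contour_integral_negatepath[OF \<gamma>(1)])
    also have "contour_integral \<gamma> (\<lambda>x. g (- x)) = contour_integral \<gamma> g"
      using ev \<gamma>(3) by (intro contour_integral_eq) auto
    finally show ?thesis .
  qed
  ultimately show ?thesis using I0 by simp
qed

lemma unif_dq:
  fixes a ay :: "complex \<Rightarrow> complex \<Rightarrow> complex"
  assumes K: "compact K" and e0: "0 < e0"
    and der: "\<And>y z. y \<in> cball c e0 \<Longrightarrow> z \<in> K \<Longrightarrow> ((\<lambda>y. a y z) has_field_derivative ay y z) (at y)"
    and cont: "continuous_on (cball c e0 \<times> K) (\<lambda>(y,z). ay y z)"
  shows "uniform_limit K (\<lambda>y z. (a y z - a c z) / (y - c)) (ay c) (at c)"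
  unfolding uniform_limit_iff
proof (intro allI impI)
  fix e :: real assume e: "0 < e"
  have uc: "uniformly_continuous_on (cball c e0 \<times> K) (\<lambda>(y,z). ay y z)"
    by (rule compact_uniformly_continuous[OF cont]) (simp add: K compact_Times)
  obtain \<eta> where \<eta>: "0 < \<eta>" and \<eta>': "\<And>x x'. x \<in> cball c e0 \<times> K \<Longrightarrow> x' \<in> cball c e0 \<times> K \<Longrightarrow>
      dist x' x < \<eta> \<Longrightarrow> dist ((\<lambda>(y,z). ay y z) x') ((\<lambda>(y,z). ay y z) x) < e/2"
    using uc e unfolding uniformly_continuous_on_def by (meson half_gt_zero)
  have "\<forall>y. y \<noteq> c \<and> dist y c < min \<eta> e0 \<longrightarrow> (\<forall>z\<in>K. dist ((a y z - a c z) / (y - c)) (ay c z) < e)"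
  proof (intro allI impI ballI)
    fix y z assume y: "y \<noteq> c \<and> dist y c < min \<eta> e0" and z: "z \<in> K"
    define h where "h t = a t z - t * ay c z" for t
    have segsub: "closed_segment c y \<subseteq> cball c e0"
    proof -
      have "c \<in> cball c e0" "y \<in> cball c e0" using y e0 by (auto simp: dist_commute)
      then show ?thesis using convex_cball closed_segment_subset by blast
    qed
    have "norm (h y - h c) \<le> (e/2) * norm (y - c)"
    proof (rule field_differentiable_bound[OF convex_closed_segment])
      fix t assume t: "t \<in> closed_segment c y"
      then have tc: "t \<in> cball c e0" using segsub by blast
      have d1: "((\<lambda>t. a t z) has_field_derivative ay t z) (at t)" by (rule der[OF tc z])
      have d2: "((\<lambda>t. t * ay c z) has_field_derivative ay c z) (at t)"
        by (auto intro!: derivative_eq_intros)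
      have "(h has_field_derivative (ay t z - ay c z)) (at t)"
        unfolding h_def using DERIV_diff[OF d1 d2] .
      then show "(h has_field_derivative (ay t z - ay c z)) (at t within closed_segment c y)"
        by (rule has_field_derivative_at_within)
      have "dist t c \<le> dist y c"
        using t by (metis closed_segment_commute dist_commute dist_in_closed_segment)
      then have "dist (t, z) (c, z) < \<eta>" using y by (simp add: dist_Pair_Pair)
      moreover have "(t, z) \<in> cball c e0 \<times> K" "(c, z) \<in> cball c e0 \<times> K" using tc z e0 by auto
      ultimately have "dist (ay t z) (ay c z) < e/2" using \<eta>' by fastforce
      then show "norm (ay t z - ay c z) \<le> e/2" by (simp add: dist_norm)
    qed auto
    moreover have "h y - h c = (y - c) * ((a y z - a c z) / (y - c) - ay c z)"
    proof -
      have "(y - c) * ((a y z - a c z) / (y - c)) = a y z - a c z" using y by simp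
      then show ?thesis by (simp add: h_def algebra_simps)
    qed
    ultimately have "norm (y - c) * norm ((a y z - a c z) / (y - c) - ay c z) \<le> (e/2) * norm (y - c)"
      by (simp add: norm_mult)
    then have "norm ((a y z - a c z) / (y - c) - ay c z) \<le> e/2"
      using y by (simp add: mult.commute)
    then show "dist ((a y z - a c z) / (y - c)) (ay c z) < e"
      using e by (simp add: dist_norm)
  qed
  then show "\<forall>\<^sub>F y in at c. \<forall>z\<in>K. dist ((a y z - a c z) / (y - c)) (ay c z) < e"
    unfolding eventually_at using \<eta> e0 by (metis min_less_iff_conj)
qed

lemma deriv_cint:
  fixes a ay :: "complex \<Rightarrow> complex \<Rightarrow> complex"
  assumes S: "open S" and \<gamma>: "valid_path \<gamma>" "path_image \<gamma> \<subseteq> S" and \<delta>: "0 < \<delta>"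
    and hol: "\<And>y. y \<in> ball c \<delta> \<Longrightarrow> a y holomorphic_on S"
    and holc: "ay c holomorphic_on S"
    and der: "\<And>y z. y \<in> ball c \<delta> \<Longrightarrow> z \<in> S \<Longrightarrow> ((\<lambda>y. a y z) has_field_derivative ay y z) (at y)"
    and cont: "continuous_on (ball c \<delta> \<times> S) (\<lambda>(y,z). ay y z)"
  shows "((\<lambda>y. contour_integral \<gamma> (a y)) has_field_derivative contour_integral \<gamma> (ay c)) (at c)"
proof -
  have p\<gamma>: "path \<gamma>" using \<gamma>(1) valid_path_imp_path by blast
  obtain d where d: "0 < d" and dd: "\<And>g h. valid_path g \<Longrightarrow> valid_path h \<Longrightarrow>
        (\<forall>t \<in> {0..1}. norm(g t - \<gamma> t) < d \<and> norm(h t - \<gamma> t) < d) \<Longrightarrow>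
        pathstart h = pathstart g \<Longrightarrow> pathfinish h = pathfinish g \<Longrightarrow>
        path_image g \<subseteq> S \<and> path_image h \<subseteq> S \<and>
        (\<forall>f. f holomorphic_on S \<longrightarrow> contour_integral h f = contour_integral g f)"
    using contour_integral_nearby_ends[OF S p\<gamma> \<gamma>(2)] by metis
  obtain g where g: "polynomial_function g" "pathstart g = pathstart \<gamma>" "pathfinish g = pathfinish \<gamma>"
      "\<And>t. t \<in> {0..1} \<Longrightarrow> norm (g t - \<gamma> t) < d"
    using path_approx_polynomial_function[OF p\<gamma> d] by blast
  have vg: "valid_path g" using g(1) valid_path_polynomial_function by blast
  have gS: "path_image g \<subseteq> S" and eqi: "\<And>f. f holomorphic_on S \<Longrightarrow> contour_integral \<gamma> f = contour_integral g f"
    using dd[OF vg \<gamma>(1)] g d by auto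
  obtain g' where g': "polynomial_function g'" "\<And>x. (g has_vector_derivative (g' x)) (at x)"
    using has_vector_derivative_polynomial_function[OF g(1)] by blast
  have "compact (g' ` {0..1})"
    by (intro compact_continuous_image continuous_on_polymonial_function g'(1)) simp
  then obtain B where B: "\<And>t. t \<in> {0..1} \<Longrightarrow> norm (g' t) \<le> B"
    by (meson bounded_iff compact_imp_bounded image_eqI)
  have Bv: "norm (vector_derivative g (at t)) \<le> B" if "t \<in> {0..1}" for t
    using vector_derivative_at[OF g'(2)] B[OF that] by simp
  define e0 where "e0 = \<delta> / 2"
  have e0: "0 < e0" "cball c e0 \<subseteq> ball c \<delta>" using \<delta> by (auto simp: e0_def)
  have K: "compact (path_image g)" using vg valid_path_imp_path by blast
  have ul: "uniform_limit (path_image g) (\<lambda>y z. (a y z - a c z) / (y - c)) (ay c) (at c)"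
  proof (rule unif_dq[OF K e0(1)])
    show "((\<lambda>y. a y z) has_field_derivative ay y z) (at y)" if "y \<in> cball c e0" "z \<in> path_image g" for y z
      using der that e0 gS by blast
    show "continuous_on (cball c e0 \<times> path_image g) (\<lambda>(y, z). ay y z)"
      by (rule continuous_on_subset[OF cont]) (use e0 gS in auto)
  qed
  have evi: "\<forall>\<^sub>F y in at c. (\<lambda>z. (a y z - a c z) / (y - c)) contour_integrable_on g"
  proof -
    have "\<forall>\<^sub>F y in at c. y \<in> ball c \<delta>"
      using \<delta> by (intro eventually_at_in_open') auto
    then show ?thesis
    proof (rule eventually_mono)
      fix y assume "y \<in> ball c \<delta>"
      then have "(\<lambda>z. (a y z - a c z) / (y - c)) holomorphic_on S"
        using hol \<delta> by (intro holomorphic_intros) auto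
      then show "(\<lambda>z. (a y z - a c z) / (y - c)) contour_integrable_on g"
        using contour_integrable_holomorphic_simple[OF _ S vg gS] by blast
    qed
  qed
  have lim: "((\<lambda>y. contour_integral g (\<lambda>z. (a y z - a c z) / (y - c))) \<longlongrightarrow> contour_integral g (ay c)) (at c)"
    using contour_integral_uniform_limit[OF evi ul Bv vg] by simp
  have "((\<lambda>y. (contour_integral \<gamma> (a y) - contour_integral \<gamma> (a c)) / (y - c)) \<longlongrightarrow> contour_integral \<gamma> (ay c)) (at c)"
  proof -
    have "\<forall>\<^sub>F y in at c. y \<in> ball c \<delta>"
      using \<delta> by (intro eventually_at_in_open') auto
    then have "\<forall>\<^sub>F y in at c. contour_integral g (\<lambda>z. (a y z - a c z) / (y - c)) =
        (contour_integral \<gamma> (a y) - contour_integral \<gamma> (a c)) / (y - c)"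
    proof (rule eventually_mono)
      fix y assume y: "y \<in> ball c \<delta>"
      have c: "c \<in> ball c \<delta>" using \<delta> by simp
      have i1: "a y contour_integrable_on g" "a c contour_integrable_on g"
        using contour_integrable_holomorphic_simple[OF hol S vg gS] y c by auto
      have "contour_integral g (\<lambda>z. (a y z - a c z) / (y - c)) = (contour_integral g (a y) - contour_integral g (a c)) / (y - c)"
        using i1 by (simp add: contour_integral_div contour_integral_diff contour_integrable_diff)
      also have "\<dots> = (contour_integral \<gamma> (a y) - contour_integral \<gamma> (a c)) / (y - c)"
        using eqi hol y c by simp
      finally show "contour_integral g (\<lambda>z. (a y z - a c z) / (y - c)) =
        (contour_integral \<gamma> (a y) - contour_integral \<gamma> (a c)) / (y - c)" .
    qed
    note ev = this
    have "contour_integral g (ay c) = contour_integral \<gamma> (ay c)" using eqi holc by simp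
    then show ?thesis using Lim_transform_eventually[OF lim ev] by simp
  qed
  then show ?thesis by (simp add: has_field_derivative_iff)
qed

lemma continuous_on_csqrt_comp:
  assumes "continuous_on A f" "\<And>x. x \<in> A \<Longrightarrow> f x \<notin> \<real>\<^sub>\<le>\<^sub>0"
  shows "continuous_on A (\<lambda>x. csqrt (f x))"
  using continuous_on_compose2[OF continuous_on_csqrt assms(1)] assms(2) by blast

lemma GEN:
  fixes E Ey :: "complex \<Rightarrow> complex \<Rightarrow> complex" and \<psi> k :: "complex \<Rightarrow> complex"
  assumes S: "open S" and \<gamma>: "valid_path \<gamma>" "path_image \<gamma> \<subseteq> S" and \<delta>: "0 < \<delta>"
    and h\<psi>: "\<psi> holomorphic_on S" and hk: "k holomorphic_on S"
    and Enz: "\<And>y z. y \<in> ball c \<delta> \<Longrightarrow> z \<in> S \<Longrightarrow> E y z \<notin> \<real>\<^sub>\<le>\<^sub>0"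
    and Epnz: "\<And>y. y \<in> ball c \<delta> \<Longrightarrow> E y p \<notin> \<real>\<^sub>\<le>\<^sub>0"
    and dE: "\<And>y z. y \<in> ball c \<delta> \<Longrightarrow> z \<in> S \<Longrightarrow> ((\<lambda>y. E y z) has_field_derivative Ey y z) (at y)"
    and dEp: "\<And>y. y \<in> ball c \<delta> \<Longrightarrow> ((\<lambda>y. E y p) has_field_derivative Ey y p) (at y)"
    and hE: "\<And>y. y \<in> ball c \<delta> \<Longrightarrow> E y holomorphic_on S"
    and hEy: "Ey c holomorphic_on S"
    and cE: "continuous_on (ball c \<delta> \<times> S) (\<lambda>x. E (fst x) (snd x))"
    and cEy: "continuous_on (ball c \<delta> \<times> S) (\<lambda>x. Ey (fst x) (snd x))"
    and cEp: "continuous_on (ball c \<delta>) (\<lambda>y. E y p)"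
    and cEyp: "continuous_on (ball c \<delta>) (\<lambda>y. Ey y p)"
  shows "((\<lambda>y. contour_integral \<gamma> (\<lambda>z. \<psi> z * k z * (csqrt (E y p) / csqrt (E y z)))) has_field_derivative
      contour_integral \<gamma> (\<lambda>z. \<psi> z * k z * ((csqrt (E c p) / csqrt (E c z)) *
          (Ey c p / (2 * E c p) - Ey c z / (2 * E c z))))) (at c)"
proof -
  define ay where "ay y z = \<psi> z * k z * ((csqrt (E y p) / csqrt (E y z)) *
          (Ey y p / (2 * E y p) - Ey y z / (2 * E y z)))" for y z
  have c: "c \<in> ball c \<delta>" using \<delta> by simp
  have main: "((\<lambda>y. contour_integral \<gamma> (\<lambda>z. \<psi> z * k z * (csqrt (E y p) / csqrt (E y z)))) has_field_derivative
      contour_integral \<gamma> (ay c)) (at c)"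
  proof (rule deriv_cint[OF S \<gamma> \<delta>])
    fix y assume y: "y \<in> ball c \<delta>"
    have "E y z \<noteq> 0" if "z \<in> S" for z using Enz[OF y that] by auto
    then show "(\<lambda>z. \<psi> z * k z * (csqrt (E y p) / csqrt (E y z))) holomorphic_on S"
      using h\<psi> hk hE[OF y] Enz[OF y]
      by (intro holomorphic_intros) auto
  next
    have "E c z \<noteq> 0" if "z \<in> S" for z using Enz[OF c that] by auto
    moreover have "E c p \<noteq> 0" using Epnz[OF c] by auto
    ultimately show "ay c holomorphic_on S" unfolding ay_def
      using h\<psi> hk hE[OF c] Enz[OF c] hEy
      by (intro holomorphic_intros) auto
  next
    fix y z assume y: "y \<in> ball c \<delta>" and z: "z \<in> S"
    define qp where "qp = csqrt (E y p)"
    define qz where "qz = csqrt (E y z)"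
    have qp0: "qp \<noteq> 0" using Epnz[OF y] by (auto simp: qp_def)
    have qz0: "qz \<noteq> 0" using Enz[OF y z] by (auto simp: qz_def)
    have dp: "((\<lambda>y. csqrt (E y p)) has_field_derivative Ey y p / (2 * qp)) (at y)"
      unfolding qp_def by (rule has_field_derivative_csqrt'[OF dEp[OF y] Epnz[OF y]])
    have dz: "((\<lambda>y. csqrt (E y z)) has_field_derivative Ey y z / (2 * qz)) (at y)"
      unfolding qz_def by (rule has_field_derivative_csqrt'[OF dE[OF y z] Enz[OF y z]])
    have dq: "((\<lambda>y. csqrt (E y p) / csqrt (E y z)) has_field_derivative
        (Ey y p / (2 * qp) * qz - qp * (Ey y z / (2 * qz))) / (qz * qz)) (at y)"
      using DERIV_divide[OF dp dz] qz0 by (simp add: qp_def qz_def)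
    have Ep: "E y p = qp^2" and Ez: "E y z = qz^2" by (simp_all add: qp_def qz_def)
    have "(Ey y p / (2 * qp) * qz - qp * (Ey y z / (2 * qz))) / (qz * qz) =
        qp / qz * (Ey y p / (2 * qp^2) - Ey y z / (2 * qz^2))"
      using qp0 qz0 by (simp add: field_simps power2_eq_square)
    also have "\<dots> = (csqrt (E y p) / csqrt (E y z)) * (Ey y p / (2 * E y p) - Ey y z / (2 * E y z))"
      using Ep Ez by (simp add: qp_def qz_def)
    finally have dq': "((\<lambda>y. csqrt (E y p) / csqrt (E y z)) has_field_derivative
        (csqrt (E y p) / csqrt (E y z)) * (Ey y p / (2 * E y p) - Ey y z / (2 * E y z))) (at y)"
      using dq by simp
    show "((\<lambda>y. \<psi> z * k z * (csqrt (E y p) / csqrt (E y z))) has_field_derivative ay y z) (at y)"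
      unfolding ay_def by (rule DERIV_cmult[OF dq'])
  next
    have cont_fst: "continuous_on (ball c \<delta> \<times> S) (\<lambda>x. E (fst x) p)"
      by (rule continuous_on_compose2[OF cEp]) (auto intro: continuous_intros)
    have cont_fsty: "continuous_on (ball c \<delta> \<times> S) (\<lambda>x. Ey (fst x) p)"
      by (rule continuous_on_compose2[OF cEyp]) (auto intro: continuous_intros)
    have nz1: "E (fst x) (snd x) \<notin> \<real>\<^sub>\<le>\<^sub>0" "E (fst x) p \<notin> \<real>\<^sub>\<le>\<^sub>0" if "x \<in> ball c \<delta> \<times> S" for x
      using Enz Epnz that by (auto simp: mem_Times_iff)
    have cq1: "continuous_on (ball c \<delta> \<times> S) (\<lambda>x. csqrt (E (fst x) p))"
      by (rule continuous_on_csqrt_comp[OF cont_fst]) (use nz1 in auto)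
    have cq2: "continuous_on (ball c \<delta> \<times> S) (\<lambda>x. csqrt (E (fst x) (snd x)))"
      by (rule continuous_on_csqrt_comp[OF cE]) (use nz1 in auto)
    have c\<psi>: "continuous_on (ball c \<delta> \<times> S) (\<lambda>x. \<psi> (snd x) * k (snd x))"
    proof -
      have "continuous_on S (\<lambda>z. \<psi> z * k z)"
        using h\<psi> hk by (intro continuous_intros holomorphic_on_imp_continuous_on)
      then show ?thesis by (rule continuous_on_compose2) (auto intro: continuous_intros)
    qed
    have nz2: "csqrt (E (fst x) (snd x)) \<noteq> 0" "E (fst x) p \<noteq> 0" "E (fst x) (snd x) \<noteq> 0"
      if "x \<in> ball c \<delta> \<times> S" for x
      using nz1[OF that] by auto
    have "continuous_on (ball c \<delta> \<times> S) (\<lambda>x. \<psi> (snd x) * k (snd x) * ((csqrt (E (fst x) p) / csqrt (E (fst x) (snd x))) *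
          (Ey (fst x) p / (2 * E (fst x) p) - Ey (fst x) (snd x) / (2 * E (fst x) (snd x)))))"
      using nz2 by (intro continuous_intros c\<psi> cq1 cq2 cont_fst cont_fsty cE cEy) auto
    then show "continuous_on (ball c \<delta> \<times> S) (\<lambda>(y, z). ay y z)"
      by (simp add: ay_def case_prod_unfold)
  qed
  then show ?thesis unfolding ay_def[abs_def] .
qed

lemma tube_nbhd:
  fixes G :: "(complex \<times> complex) set"
  assumes K: "compact K" and G: "open G" and sub: "{c} \<times> K \<subseteq> G"
  obtains \<delta> S where "0 < \<delta>" "open S" "K \<subseteq> S" "\<And>y z. y \<in> ball c \<delta> \<Longrightarrow> z \<in> S \<Longrightarrow> (y,z) \<in> G"
proof -
  have "compact ({c} \<times> K)" using K by (simp add: compact_Times)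
  then obtain \<epsilon> where \<epsilon>: "\<epsilon> > 0" "(\<Union>x\<in>{c} \<times> K. ball x \<epsilon>) \<subseteq> G"
    using compact_subset_open_imp_ball_epsilon_subset[OF _ G sub] by blast
  define S where "S = (\<Union>z\<in>K. ball z (\<epsilon>/2))"
  have "open S" by (simp add: S_def open_UN)
  moreover have "K \<subseteq> S" using \<epsilon> by (auto simp: S_def)
  moreover have "(y,z) \<in> G" if y: "y \<in> ball c (\<epsilon>/2)" and z: "z \<in> S" for y z
  proof -
    obtain z0 where z0: "z0 \<in> K" "dist z0 z < \<epsilon>/2" using z by (auto simp: S_def)
    have "dist (c, z0) (y, z) = sqrt ((dist c y)^2 + (dist z0 z)^2)" by (simp add: dist_Pair_Pair)
    also have "\<dots> \<le> dist c y + dist z0 z" by (rule sqrt_sum_squares_le_sum) auto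
    also have "\<dots> < \<epsilon>" using y z0 by simp
    finally have "(y, z) \<in> ball (c, z0) \<epsilon>" by simp
    then show ?thesis using \<epsilon>(2) z0(1) by blast
  qed
  ultimately show ?thesis using that[of "\<epsilon>/2" S] \<epsilon> by auto
qed

lemma ray_wn0:
  assumes s: "s \<noteq> 0" and \<gamma>: "path \<gamma>" "pathfinish \<gamma> = pathstart \<gamma>" "path_image \<gamma> \<subseteq> ball 0 \<rho>"
    and dis: "path_image \<gamma> \<inter> cutinf s = {}" and w: "w \<in> cutinf s"
  shows "winding_number \<gamma> w = 0"
proof -
  obtain t::real where t: "1 \<le> \<bar>t\<bar>" "w = complex_of_real t * csqrt s" using w by (auto simp: cutinf_iff)
  have w0: "w \<noteq> 0" using t s by auto
  define K0 where "K0 = \<bar>\<rho>\<bar> / norm w + 1"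
  have K0: "1 \<le> K0" by (simp add: K0_def)
  define seg where "seg = closed_segment w (complex_of_real K0 * w)"
  have "seg \<subseteq> cutinf s"
  proof
    fix x assume "x \<in> seg"
    then obtain k where k: "x = complex_of_real k * w" "min 1 K0 \<le> k" using seg_scale unfolding seg_def by blast
    have "1 \<le> k" using k K0 by simp
    then have "1 * 1 \<le> \<bar>k\<bar> * \<bar>t\<bar>" using t(1) by (intro mult_mono) auto
    then have "1 \<le> \<bar>k * t\<bar>" by (simp add: abs_mult)
    moreover have "x = complex_of_real (k * t) * csqrt s" using k t by simp
    ultimately show "x \<in> cutinf s" unfolding cutinf_iff by blast
  qed
  then have "seg \<inter> path_image \<gamma> = {}" using dis by blast
  then have "winding_number \<gamma> w = winding_number \<gamma> (complex_of_real K0 * w)"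
    using winding_number_eq[OF \<gamma>(1,2), of w seg] by (simp add: seg_def)
  also have "\<dots> = 0"
  proof (rule winding_number_zero_outside[OF \<gamma>(1) convex_ball \<gamma>(2) _ \<gamma>(3)])
    have "norm (complex_of_real K0 * w) = K0 * norm w" using K0 by (simp add: norm_mult)
    also have "\<dots> = \<bar>\<rho>\<bar> + norm w" using w0 by (simp add: K0_def distrib_right)
    finally have "norm (complex_of_real K0 * w) = \<bar>\<rho>\<bar> + norm w" .
    moreover have "\<rho> \<le> \<bar>\<rho>\<bar> + norm w" by (smt (verit) norm_ge_zero)
    ultimately show "complex_of_real K0 * w \<notin> ball 0 \<rho>" by simp
  qed
  finally show ?thesis .
qed

lemma ball_as_norm: "ball (0::complex) \<rho> = {z. norm z \<in> {..<\<rho>}}"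
  by auto

lemma ext_as_norm: "{z::complex. R < norm z} = {z. norm z \<in> {R<..}}"
  by auto

lemma psi_odd:
  assumes "\<pi> \<in> {fst, snd}" "\<phi> (- z) = - \<phi> z"
  shows "\<pi> (\<phi> (- z)) = - \<pi> (\<phi> z)"
  using assms by auto

lemma mid_min: "(a::real) < b \<Longrightarrow> a < \<rho> \<Longrightarrow> a < (a + min \<rho> b)/2 \<and> (a + min \<rho> b)/2 < b \<and> (a + min \<rho> b)/2 < \<rho>"
  by (auto simp: min_def)

lemma mid_max: "(a::real) < b \<Longrightarrow> R < b \<Longrightarrow> a < (max R a + b)/2 \<and> (max R a + b)/2 < b \<and> R < (max R a + b)/2"
  by (auto simp: max_def)

lemma pterm0:
  fixes \<psi> :: "complex \<Rightarrow> complex"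
  assumes s: "s \<noteq> 0" "norm r < norm s" and \<rho>: "norm (csqrt r) < \<rho>"
    and h\<psi>: "\<psi> holomorphic_on ball 0 \<rho>" and odd\<psi>: "\<And>z. z \<in> ball 0 \<rho> \<Longrightarrow> \<psi> (- z) = - \<psi> z"
    and cc: "c = r \<or> c = s"
    and \<gamma>: "valid_path \<gamma>" "pathfinish \<gamma> = pathstart \<gamma>" "path_image \<gamma> \<subseteq> ball 0 \<rho> \<inter> branch_dom r s"
    and enc: "\<forall>z\<in>cut0 r. winding_number \<gamma> z = 1"
  shows "contour_integral \<gamma> (\<lambda>z. \<psi> z / ((z^2 - c) * wbr r s z)) = 0"
proof -
  define U where "U = ball 0 \<rho> \<inter> branch_dom r s"
  have oU: "open U" using open_bd[OF s(1)] by (simp add: U_def open_Int)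
  have cU: "connected U"
  proof -
    define c' where "c' = (norm (csqrt r) + min \<rho> (norm (csqrt s))) / 2"
    have lt: "norm (csqrt r) < norm (csqrt s)" using s(2) by simp
    have "connected ({z. norm z \<in> {..<\<rho>}} \<inter> branch_dom r s)"
      using mid_min[OF lt \<rho>] unfolding c'_def[symmetric] by (intro bd_connected[OF s(1), of r c']) auto
    then show ?thesis by (simp add: U_def ball_as_norm)
  qed
  have hol: "(\<lambda>z. \<psi> z / ((z^2 - c) * wbr r s z)) holomorphic_on U"
  proof -
    have "wbr r s holomorphic_on U" using wbr_hol[OF s(1)] by (rule holomorphic_on_subset) (auto simp: U_def)
    moreover have "\<psi> holomorphic_on U" using h\<psi> by (rule holomorphic_on_subset) (auto simp: U_def)
    moreover have "(z^2 - c) * wbr r s z \<noteq> 0" if "z \<in> U" for z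
      using that bd_F_nonzero[OF _ s(1)] wbr_nonzero[OF s(1)] cc by (auto simp: U_def)
    ultimately show ?thesis by (intro holomorphic_intros) auto
  qed
  show ?thesis
  proof (rule even_int_zero[OF oU cU hol])
    show "- z \<in> U" if "z \<in> U" for z using that bd_uminus by (auto simp: U_def)
    show "\<psi> (- z) / (((- z)^2 - c) * wbr r s (- z)) = \<psi> z / ((z^2 - c) * wbr r s z)" if "z \<in> U" for z
      using that odd\<psi> wbr_odd[OF s] by (auto simp: U_def)
    show "valid_path \<gamma>" "pathfinish \<gamma> = pathstart \<gamma>" "path_image \<gamma> \<subseteq> U" using \<gamma> by (auto simp: U_def)
  next
    fix w assume w: "w \<notin> U"
    have p\<gamma>: "path \<gamma>" using \<gamma>(1) valid_path_imp_path by blast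
    have dis: "path_image \<gamma> \<inter> cutinf s = {}" using \<gamma>(3) by (auto simp: branch_dom_def)
    have im: "path_image \<gamma> \<subseteq> ball 0 \<rho>" using \<gamma>(3) by auto
    consider "w \<notin> ball 0 \<rho>" | "w \<in> cut0 r" | "w \<in> cutinf s" using w by (auto simp: U_def branch_dom_def)
    then show "winding_number \<gamma> w = winding_number \<gamma> (- w)"
    proof cases
      case 1
      then have "- w \<notin> ball 0 \<rho>" by simp
      then show ?thesis using 1 winding_number_zero_outside[OF p\<gamma> convex_ball \<gamma>(2) _ im] by metis
    next
      case 2
      then have "- w \<in> cut0 r" by (simp add: cut0_uminus)
      then show ?thesis using 2 enc by simp
    next
      case 3
      then have "- w \<in> cutinf s" by (simp add: cutinf_uminus)
      then show ?thesis using 3 ray_wn0[OF s(1) p\<gamma> \<gamma>(2) im dis] by metis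
    qed
  qed
qed

lemma pterm1:
  fixes \<psi> :: "complex \<Rightarrow> complex"
  assumes s: "s \<noteq> 0" "norm r < norm s" and R: "R < norm (csqrt s)" and R0: "0 < R"
    and h\<psi>: "\<psi> holomorphic_on {z. R < norm z}" and odd\<psi>: "\<And>z. R < norm z \<Longrightarrow> \<psi> (- z) = - \<psi> z"
    and cc: "c = r \<or> c = s"
    and \<gamma>: "valid_path \<gamma>" "pathfinish \<gamma> = pathstart \<gamma>" "path_image \<gamma> \<subseteq> {z. R < norm z} \<inter> branch_dom r s"
    and enc: "\<forall>z\<in>cutinf s. winding_number \<gamma> z = 0"
  shows "contour_integral \<gamma> (\<lambda>z. \<psi> z / ((z^2 - c) * wbr r s z)) = 0"
proof -
  define U where "U = {z. R < norm z} \<inter> branch_dom r s"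
  have oU: "open U" using open_bd[OF s(1)]
    by (simp add: U_def open_Int open_Collect_less continuous_on_norm_id continuous_intros)
  have cU: "connected U"
  proof -
    define c' where "c' = (max R (norm (csqrt r)) + norm (csqrt s)) / 2"
    have lt: "norm (csqrt r) < norm (csqrt s)" using s(2) by simp
    have "connected ({z. norm z \<in> {R<..}} \<inter> branch_dom r s)"
      using mid_max[OF lt R] unfolding c'_def[symmetric] by (intro bd_connected[OF s(1), of r c']) auto
    then show ?thesis by (simp add: U_def)
  qed
  have hol: "(\<lambda>z. \<psi> z / ((z^2 - c) * wbr r s z)) holomorphic_on U"
  proof -
    have "wbr r s holomorphic_on U" using wbr_hol[OF s(1)] by (rule holomorphic_on_subset) (auto simp: U_def)
    moreover have "\<psi> holomorphic_on U" using h\<psi> by (rule holomorphic_on_subset) (auto simp: U_def)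
    moreover have "(z^2 - c) * wbr r s z \<noteq> 0" if "z \<in> U" for z
      using that bd_F_nonzero[OF _ s(1)] wbr_nonzero[OF s(1)] cc by (auto simp: U_def)
    ultimately show ?thesis by (intro holomorphic_intros) auto
  qed
  show ?thesis
  proof (rule even_int_zero[OF oU cU hol])
    show "- z \<in> U" if "z \<in> U" for z using that bd_uminus by (auto simp: U_def)
    show "\<psi> (- z) / (((- z)^2 - c) * wbr r s (- z)) = \<psi> z / ((z^2 - c) * wbr r s z)" if "z \<in> U" for z
      using that odd\<psi> wbr_odd[OF s] by (auto simp: U_def)
    show "valid_path \<gamma>" "pathfinish \<gamma> = pathstart \<gamma>" "path_image \<gamma> \<subseteq> U" using \<gamma> by (auto simp: U_def)
  next
    fix w assume w: "w \<notin> U"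
    have p\<gamma>: "path \<gamma>" using \<gamma>(1) valid_path_imp_path by blast
    have dis0: "path_image \<gamma> \<inter> cut0 r = {}" using \<gamma>(3) by (auto simp: branch_dom_def)
    have disc: "path_image \<gamma> \<inter> cball 0 R = {}" using \<gamma>(3) by auto
    have zc: "0 \<in> cut0 r" by (auto simp: cut0_iff intro!: exI[of _ 0])
    consider "w \<in> cball 0 R" | "w \<in> cut0 r" | "w \<in> cutinf s" using w by (force simp: U_def branch_dom_def)
    then show "winding_number \<gamma> w = winding_number \<gamma> (- w)"
    proof cases
      case 1
      then have "- w \<in> cball 0 R" by simp
      have d2: "cball 0 R \<inter> path_image \<gamma> = {}" using disc by blast
      have z0: "(0::complex) \<in> cball 0 R" using R0 by simp
      have "winding_number \<gamma> w = winding_number \<gamma> 0"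
        using winding_number_eq[OF p\<gamma> \<gamma>(2) 1 z0 connected_cball d2] .
      moreover have "winding_number \<gamma> (- w) = winding_number \<gamma> 0"
        using winding_number_eq[OF p\<gamma> \<gamma>(2) \<open>- w \<in> cball 0 R\<close> z0 connected_cball d2] .
      ultimately show ?thesis by simp
    next
      case 2
      then have m: "- w \<in> cut0 r" by (simp add: cut0_uminus)
      have cc0: "connected (cut0 r)" by (simp add: cut0_def)
      have "winding_number \<gamma> w = winding_number \<gamma> 0"
        using winding_number_eq[OF p\<gamma> \<gamma>(2) 2 zc cc0] dis0 by blast
      moreover have "winding_number \<gamma> (- w) = winding_number \<gamma> 0"
        using winding_number_eq[OF p\<gamma> \<gamma>(2) m zc cc0] dis0 by blast
      ultimately show ?thesis by simp
    next
      case 3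
      then have "- w \<in> cutinf s" by (simp add: cutinf_uminus)
      then show ?thesis using 3 enc by simp
    qed
  qed
qed

lemma open_nonpos_helper:
  fixes f :: "'a::topological_space \<Rightarrow> complex"
  assumes "open D" "continuous_on D f"
  shows "open (D \<inter> {x. f x \<notin> \<real>\<^sub>\<le>\<^sub>0})"
proof -
  have "open (D \<inter> f -` (- \<real>\<^sub>\<le>\<^sub>0))"
    by (rule continuous_open_preimage[OF assms(2,1)]) (intro open_Compl closed_nonpos_Reals_complex)
  moreover have "D \<inter> f -` (- \<real>\<^sub>\<le>\<^sub>0) = D \<inter> {x. f x \<notin> \<real>\<^sub>\<le>\<^sub>0}" by auto
  ultimately show ?thesis by simp
qed

lemma alg_final':
  fixes \<psi> wp wz z p A B :: complex
  assumes "z - p \<noteq> 0" "wz \<noteq> 0" "A \<noteq> 0" "B \<noteq> 0"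
  shows "\<psi> * (wp / ((z - p) * wz)) * ((- ((z - p) * (z + p))) / (2 * A * B)) =
    (- wp / (2 * A)) * (z * \<psi> / (B * wz)) + (- wp / (2 * A) * p) * (\<psi> / (B * wz))"
  using assms by (simp add: field_simps)

lemma alg_r':
  fixes a b c :: complex
  assumes "a \<noteq> 0" "b \<noteq> 0" "a + c \<noteq> 0" "b + c \<noteq> 0"
  shows "(- (1 / (a + c))) / (2 * (1 - c / (a + c))) - (- (1 / (b + c))) / (2 * (1 - c / (b + c))) =
    (a - b) / (2 * a * b)"
proof -
  have 1: "(- (1 / (a + c))) / (2 * (1 - c / (a + c))) = - 1 / (2 * a)"
    using assms by (simp add: field_simps)
  have 2: "(- (1 / (b + c))) / (2 * (1 - c / (b + c))) = - 1 / (2 * b)"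
    using assms by (simp add: field_simps)
  show ?thesis unfolding 1 2 using assms by (simp add: field_simps)
qed

lemma alg_s':
  fixes a b c :: complex
  assumes "c \<noteq> 0" "a \<noteq> 0" "b \<noteq> 0"
  shows "((a + c) / c^2) / (2 * (1 - (a + c) / c)) - ((b + c) / c^2) / (2 * (1 - (b + c) / c)) =
    (a - b) / (2 * a * b)"
proof -
  have 1: "((a + c) / c^2) / (2 * (1 - (a + c) / c)) = - 1 / (2 * a) - 1 / (2 * c)"
    using assms by (simp add: field_simps power2_eq_square)
  have 2: "((b + c) / c^2) / (2 * (1 - (b + c) / c)) = - 1 / (2 * b) - 1 / (2 * c)"
    using assms by (simp add: field_simps power2_eq_square)
  show ?thesis unfolding 1 2 using assms by (simp add: field_simps)
qed

lemma final_r: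
  fixes \<psi> wp wz z p r :: complex
  assumes "z \<noteq> p" "wz \<noteq> 0" "z^2 \<noteq> r" "p^2 \<noteq> r" "z \<noteq> 0" "p \<noteq> 0"
  shows "\<psi> * (wp / ((z - p) * wz)) * ((- (1 / p^2)) / (2 * (1 - r / p^2)) - (- (1 / z^2)) / (2 * (1 - r / z^2))) =
    (- wp / (2 * (p^2 - r))) * (z * \<psi> / ((z^2 - r) * wz)) + (- wp / (2 * (p^2 - r)) * p) * (\<psi> / ((z^2 - r) * wz))"
proof -
  have "(- (1 / p^2)) / (2 * (1 - r / p^2)) - (- (1 / z^2)) / (2 * (1 - r / z^2)) =
      ((p^2 - r) - (z^2 - r)) / (2 * (p^2 - r) * (z^2 - r))"
    using alg_r'[of "p^2 - r" "z^2 - r" r] assms by simp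
  also have "(p^2 - r) - (z^2 - r) = - ((z - p) * (z + p))" by (simp add: power2_eq_square algebra_simps)
  finally show ?thesis using alg_final'[of z p wz "p^2 - r" "z^2 - r" \<psi> wp] assms by simp
qed

lemma final_s:
  fixes \<psi> wp wz z p s :: complex
  assumes "z \<noteq> p" "wz \<noteq> 0" "z^2 \<noteq> s" "p^2 \<noteq> s" "s \<noteq> 0"
  shows "\<psi> * (wp / ((z - p) * wz)) * ((p^2 / s^2) / (2 * (1 - p^2 / s)) - (z^2 / s^2) / (2 * (1 - z^2 / s))) =
    (- wp / (2 * (p^2 - s))) * (z * \<psi> / ((z^2 - s) * wz)) + (- wp / (2 * (p^2 - s)) * p) * (\<psi> / ((z^2 - s) * wz))"
proof -
  have "(p^2 / s^2) / (2 * (1 - p^2 / s)) - (z^2 / s^2) / (2 * (1 - z^2 / s)) =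
      ((p^2 - s) - (z^2 - s)) / (2 * (p^2 - s) * (z^2 - s))"
    using alg_s'[of s "p^2 - s" "z^2 - s"] assms by simp
  also have "(p^2 - s) - (z^2 - s) = - ((z - p) * (z + p))" by (simp add: power2_eq_square algebra_simps)
  finally show ?thesis using alg_final'[of z p wz "p^2 - s" "z^2 - s" \<psi> wp] assms by simp
qed

lemma alg_end:
  fixes X w J0 J1 :: complex
  assumes "X \<noteq> 0"
  shows "1 / (complex_of_real (4 * pi) * \<i>) * ((- w / (2 * X)) * J0 + (- w / (2 * X)) * J1) =
    (- 1 / (complex_of_real (8 * pi) * \<i>) * (J0 + J1)) * (w / X)"
  using assms by (simp add: field_simps)

lemma rpart:
  fixes \<psi> :: "complex \<Rightarrow> complex" and \<rho> R :: real and \<gamma>0 \<gamma>1 :: "real \<Rightarrow> complex" and r s p :: complex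
  assumes s0: "s \<noteq> 0" and rs: "norm r < norm s" and \<rho>: "norm (csqrt r) < \<rho>"
    and R: "R < norm (csqrt s)" and R0: "0 < R"
    and h\<psi>0: "\<psi> holomorphic_on ball 0 \<rho>" and h\<psi>1: "\<psi> holomorphic_on {z. R < norm z}"
    and odd\<psi>0: "\<And>z. z \<in> ball 0 \<rho> \<Longrightarrow> \<psi> (- z) = - \<psi> z"
    and odd\<psi>1: "\<And>z. R < norm z \<Longrightarrow> \<psi> (- z) = - \<psi> z"
    and g0: "valid_path \<gamma>0" "pathfinish \<gamma>0 = pathstart \<gamma>0"
      "path_image \<gamma>0 \<subseteq> ball 0 \<rho> \<inter> branch_dom r s" "\<forall>z\<in>cut0 r. winding_number \<gamma>0 z = 1"
    and g1: "valid_path \<gamma>1" "pathfinish \<gamma>1 = pathstart \<gamma>1"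
      "path_image \<gamma>1 \<subseteq> {z. R < norm z} \<inter> branch_dom r s" "\<forall>z\<in>cutinf s. winding_number \<gamma>1 z = 0"
    and pbd: "p \<in> branch_dom r s" and pn: "p \<notin> path_image \<gamma>0 \<union> path_image \<gamma>1"
  shows "((\<lambda>r'. 1 / (4 * pi * \<i>) * cint \<gamma>0 \<gamma>1 (\<lambda>z. \<psi> z * alpha_coeff r' s p z)) has_field_derivative
        (- 1 / (8 * pi * \<i>) * cint \<gamma>0 \<gamma>1 (\<lambda>z. z * \<psi> z / ((z^2 - r) * wbr r s z))) * (wbr r s p / (p^2 - r))) (at r)"
proof -
  define K where "K = path_image \<gamma>0 \<union> path_image \<gamma>1"
  have cK: "compact K" using g0(1) g1(1)
    by (auto simp: K_def intro!: compact_Un compact_path_image valid_path_imp_path)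
  have Kbd: "K \<subseteq> branch_dom r s" using g0(3) g1(3) by (auto simp: K_def)
  have p0: "p \<noteq> 0" using bd_nonzero(1)[OF pbd] .
  define D where "D = {x::complex\<times>complex. snd x \<noteq> 0 \<and> snd x \<noteq> p \<and> norm (fst x) < norm s}"
  have oD: "open D" unfolding D_def
    by (intro open_Collect_conj open_Collect_neq open_Collect_less continuous_intros)
  define D1 where "D1 = D \<inter> {x. 1 - fst x / (snd x)^2 \<notin> \<real>\<^sub>\<le>\<^sub>0}"
  have oD1: "open D1" unfolding D1_def
    by (rule open_nonpos_helper[OF oD]) (auto simp: D_def intro!: continuous_intros)
  define D2 where "D2 = D1 \<inter> {x. 1 - (snd x)^2 / s \<notin> \<real>\<^sub>\<le>\<^sub>0}"
  have oD2: "open D2" unfolding D2_def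
    by (rule open_nonpos_helper[OF oD1]) (use s0 in \<open>auto intro!: continuous_intros\<close>)
  define G where "G = D2 \<inter> {x. 1 - fst x / p^2 \<notin> \<real>\<^sub>\<le>\<^sub>0}"
  have oG: "open G" unfolding G_def
    by (rule open_nonpos_helper[OF oD2]) (use p0 in \<open>auto intro!: continuous_intros\<close>)
  have sub: "{r} \<times> K \<subseteq> G"
  proof
    fix x assume "x \<in> {r} \<times> K"
    then obtain z where x: "x = (r, z)" "z \<in> K" by blast
    have zb: "z \<in> branch_dom r s" using x(2) Kbd by blast
    have "z \<noteq> p" using x(2) pn by (auto simp: K_def)
    then show "x \<in> G" using x bd_nonzero[OF zb] bd_nonzero2[OF zb s0] bd_nonzero(2)[OF pbd] rs
      by (simp add: G_def D2_def D1_def D_def)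
  qed
  obtain \<delta> S' where \<delta>: "0 < \<delta>" "open S'" "K \<subseteq> S'" "\<And>y z. y \<in> ball r \<delta> \<Longrightarrow> z \<in> S' \<Longrightarrow> (y,z) \<in> G"
    using tube_nbhd[OF cK oG sub] by blast
  have Gd: "z \<noteq> 0 \<and> z \<noteq> p \<and> norm y < norm s \<and> 1 - y / z^2 \<notin> \<real>\<^sub>\<le>\<^sub>0 \<and> 1 - z^2 / s \<notin> \<real>\<^sub>\<le>\<^sub>0 \<and> 1 - y / p^2 \<notin> \<real>\<^sub>\<le>\<^sub>0"
    if "y \<in> ball r \<delta>" "z \<in> S'" for y z
    using \<delta>(4)[OF that] by (simp add: G_def D2_def D1_def D_def)
  have z0: "pathstart \<gamma>0 \<in> S'" using \<delta>(3) by (auto simp: K_def)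
  have ys: "norm y < norm s" "1 - y / p^2 \<notin> \<real>\<^sub>\<le>\<^sub>0" if "y \<in> ball r \<delta>" for y
    using Gd[OF that z0] by auto
  have bdz: "z \<in> branch_dom y s" if "y \<in> ball r \<delta>" "z \<in> S'" for y z
    using Gd[OF that] by (auto simp: branch_dom_def cut0_iff2 cutinf_iff2[OF s0])
  have bdp: "p \<in> branch_dom y s" if "y \<in> ball r \<delta>" for y
    using ys[OF that] p0 pbd by (auto simp: branch_dom_def cut0_iff2)
  define E where "E y z = 1 - y / z^2" for y z :: complex
  define Ey where "Ey (y::complex) z = - (1 / z^2)" for y z :: complex
  define k where "k z = p * S2 s p / ((z - p) * (z * S2 s z))" for z
  have Rt_eq: "Rt y s p z = k z * (csqrt (E y p) / csqrt (E y z))" for y z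
    unfolding Rt_def k_def E_def S1_def by (simp add: times_divide_times_eq ac_simps)
  have aeq: "\<psi> z * alpha_coeff y s p z = \<psi> z * k z * (csqrt (E y p) / csqrt (E y z))"
    if "y \<in> ball r \<delta>" "z \<in> K" for y z
    using alpha_Rt[OF s0 ys(1)[OF that(1)] bdp[OF that(1)] bdz[OF that(1)]] that \<delta>(3) Rt_eq by auto
  have rb: "r \<in> ball r \<delta>" using \<delta>(1) by simp
  have gen: "((\<lambda>y. contour_integral \<gamma> (\<lambda>z. \<psi> z * k z * (csqrt (E y p) / csqrt (E y z)))) has_field_derivative
      contour_integral \<gamma> (\<lambda>z. \<psi> z * k z * ((csqrt (E r p) / csqrt (E r z)) *
          (Ey r p / (2 * E r p) - Ey r z / (2 * E r z))))) (at r)"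
    if T: "open T" "T \<subseteq> S'" "valid_path \<gamma>" "path_image \<gamma> \<subseteq> T" "\<psi> holomorphic_on T" for \<gamma> T
  proof (rule GEN[OF T(1) T(3) T(4) \<delta>(1) T(5)])
    have kz: "z \<noteq> 0 \<and> z \<noteq> p \<and> 1 - z^2 / s \<notin> \<real>\<^sub>\<le>\<^sub>0" if "z \<in> T" for z
      using Gd[OF rb] T(2) that by blast
    have kz2: "csqrt (1 - z^2 / s) \<noteq> 0" if "z \<in> T" for z
    proof
      assume "csqrt (1 - z^2 / s) = 0"
      then have "1 - z^2 / s = 0" by simp
      then show False using kz[OF that] by simp
    qed
    have "(\<lambda>z. p * csqrt (1 - p^2 / s) / ((z - p) * (z * csqrt (1 - z^2 / s)))) holomorphic_on T"
      using kz kz2 s0 by (intro holomorphic_intros) auto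
    then show "k holomorphic_on T" unfolding k_def S2_def .
    show "E y z \<notin> \<real>\<^sub>\<le>\<^sub>0" if "y \<in> ball r \<delta>" "z \<in> T" for y z
      using Gd[OF that(1)] T(2) that(2) by (auto simp: E_def)
    show "E y p \<notin> \<real>\<^sub>\<le>\<^sub>0" if "y \<in> ball r \<delta>" for y
      using ys[OF that] by (simp add: E_def)
    have dE: "((\<lambda>y. E y z) has_field_derivative Ey y z) (at y)" for y z
    proof -
      have "((\<lambda>y. y / z^2) has_field_derivative 1 / z^2) (at y)" by (rule DERIV_cdivide[OF DERIV_ident])
      then have "((\<lambda>y. 1 - y / z^2) has_field_derivative 0 - 1 / z^2) (at y)" by (intro DERIV_diff DERIV_const)
      then show ?thesis by (simp add: E_def Ey_def)
    qed
    show "((\<lambda>y. E y z) has_field_derivative Ey y z) (at y)" for y z by (rule dE)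
    show "((\<lambda>y. E y p) has_field_derivative Ey y p) (at y)" for y by (rule dE)
    have nz: "z \<noteq> 0" if "z \<in> T" for z using Gd[OF rb] T(2) that by blast
    show "E y holomorphic_on T" for y
      unfolding E_def using nz by (intro holomorphic_intros) auto
    show "Ey r holomorphic_on T"
      unfolding Ey_def using nz by (intro holomorphic_intros) auto
    have nz2: "snd x \<noteq> 0" if "x \<in> ball r \<delta> \<times> T" for x using nz that by (auto simp: mem_Times_iff)
    show "continuous_on (ball r \<delta> \<times> T) (\<lambda>x. E (fst x) (snd x))"
      unfolding E_def using nz2 by (intro continuous_intros) auto
    show "continuous_on (ball r \<delta> \<times> T) (\<lambda>x. Ey (fst x) (snd x))"
      unfolding Ey_def using nz2 by (intro continuous_intros) auto
    show "continuous_on (ball r \<delta>) (\<lambda>y. E y p)"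
      unfolding E_def using p0 by (intro continuous_intros) auto
    show "continuous_on (ball r \<delta>) (\<lambda>y. Ey y p)"
      unfolding Ey_def by (intro continuous_intros)
  qed
  define T0 where "T0 = S' \<inter> ball 0 \<rho>"
  define T1 where "T1 = S' \<inter> {z. R < norm z}"
  have oT1: "open {z::complex. R < norm z}"
    by (simp add: open_Collect_less continuous_on_norm_id continuous_intros)
  have oT0: "open T0" unfolding T0_def using \<delta>(2) by (simp add: open_Int)
  have oT1': "open T1" unfolding T1_def using \<delta>(2) oT1 by (simp add: open_Int)
  have i0: "path_image \<gamma>0 \<subseteq> T0" using \<delta>(3) g0(3) by (auto simp: T0_def K_def)
  have i1: "path_image \<gamma>1 \<subseteq> T1" using \<delta>(3) g1(3) by (auto simp: T1_def K_def)
  have d0: "((\<lambda>y. contour_integral \<gamma>0 (\<lambda>z. \<psi> z * k z * (csqrt (E y p) / csqrt (E y z)))) has_field_derivative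
      contour_integral \<gamma>0 (\<lambda>z. \<psi> z * k z * ((csqrt (E r p) / csqrt (E r z)) *
          (Ey r p / (2 * E r p) - Ey r z / (2 * E r z))))) (at r)"
    by (rule gen[OF oT0 _ g0(1) i0]) (auto simp: T0_def intro: holomorphic_on_subset[OF h\<psi>0])
  have d1: "((\<lambda>y. contour_integral \<gamma>1 (\<lambda>z. \<psi> z * k z * (csqrt (E y p) / csqrt (E y z)))) has_field_derivative
      contour_integral \<gamma>1 (\<lambda>z. \<psi> z * k z * ((csqrt (E r p) / csqrt (E r z)) *
          (Ey r p / (2 * E r p) - Ey r z / (2 * E r z))))) (at r)"
    by (rule gen[OF oT1' _ g1(1) i1]) (auto simp: T1_def intro: holomorphic_on_subset[OF h\<psi>1])
  define F where "F y = 1 / (4 * pi * \<i>) * (contour_integral \<gamma>0 (\<lambda>z. \<psi> z * k z * (csqrt (E y p) / csqrt (E y z)))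
      + contour_integral \<gamma>1 (\<lambda>z. \<psi> z * k z * (csqrt (E y p) / csqrt (E y z))))" for y
  define ig where "ig z = \<psi> z * k z * ((csqrt (E r p) / csqrt (E r z)) *
          (Ey r p / (2 * E r p) - Ey r z / (2 * E r z)))" for z
  have dF: "(F has_field_derivative 1 / (4 * pi * \<i>) * (contour_integral \<gamma>0 ig + contour_integral \<gamma>1 ig)) (at r)"
    unfolding F_def ig_def by (intro DERIV_cmult DERIV_add d0 d1)
  have eqF: "F y = 1 / (4 * pi * \<i>) * cint \<gamma>0 \<gamma>1 (\<lambda>z. \<psi> z * alpha_coeff y s p z)" if "y \<in> ball r \<delta>" for y
  proof -
    have "contour_integral \<gamma>0 (\<lambda>z. \<psi> z * alpha_coeff y s p z) = contour_integral \<gamma>0 (\<lambda>z. \<psi> z * k z * (csqrt (E y p) / csqrt (E y z)))"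
      by (rule contour_integral_eq) (use aeq[OF that] in \<open>auto simp: K_def\<close>)
    moreover have "contour_integral \<gamma>1 (\<lambda>z. \<psi> z * alpha_coeff y s p z) = contour_integral \<gamma>1 (\<lambda>z. \<psi> z * k z * (csqrt (E y p) / csqrt (E y z)))"
      by (rule contour_integral_eq) (use aeq[OF that] in \<open>auto simp: K_def\<close>)
    ultimately show ?thesis by (simp add: F_def cint_def)
  qed
  have main: "((\<lambda>r'. 1 / (4 * pi * \<i>) * cint \<gamma>0 \<gamma>1 (\<lambda>z. \<psi> z * alpha_coeff r' s p z)) has_field_derivative
      1 / (4 * pi * \<i>) * (contour_integral \<gamma>0 ig + contour_integral \<gamma>1 ig)) (at r)"
    by (rule has_field_derivative_transform_within_open[OF dF open_ball rb eqF])
  define A where "A = - wbr r s p / (2 * (p^2 - r))"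
  define f1 where "f1 z = z * \<psi> z / ((z^2 - r) * wbr r s z)" for z
  define f2 where "f2 z = \<psi> z / ((z^2 - r) * wbr r s z)" for z
  have pr: "p^2 \<noteq> r" using bd_F_nonzero[OF pbd s0] by simp
  have int_eq: "ig z = A * f1 z + (A * p) * f2 z" if zb: "z \<in> branch_dom r s" and zp: "z \<noteq> p" for z
  proof -
    have "k z * (csqrt (E r p) / csqrt (E r z)) = wbr r s p / ((z - p) * wbr r s z)"
      using Rt_eq[of r z] alpha_Rt[OF s0 rs pbd zb] by (simp add: alpha_coeff_def)
    then have "ig z = \<psi> z * (wbr r s p / ((z - p) * wbr r s z)) * (Ey r p / (2 * E r p) - Ey r z / (2 * E r z))"
      unfolding ig_def by (metis (no_types, lifting) mult.assoc)
    also have "\<dots> = A * f1 z + (A * p) * f2 z"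
      unfolding A_def f1_def f2_def E_def Ey_def
      by (rule final_r) (use zp wbr_nonzero[OF s0 zb] bd_F_nonzero[OF zb s0] bd_nonzero(1)[OF zb] p0 pr in auto)
    finally show ?thesis .
  qed
  have hf: "f1 holomorphic_on U" "f2 holomorphic_on U"
    if "U \<subseteq> branch_dom r s" "\<psi> holomorphic_on U" for U
  proof -
    have "wbr r s holomorphic_on U" using wbr_hol[OF s0] that(1) by (rule holomorphic_on_subset)
    moreover have "(z^2 - r) * wbr r s z \<noteq> 0" if "z \<in> U" for z
      using that \<open>U \<subseteq> _\<close> bd_F_nonzero[OF _ s0] wbr_nonzero[OF s0] by auto
    ultimately show "f1 holomorphic_on U" "f2 holomorphic_on U"
      unfolding f1_def f2_def using that(2) by (auto intro!: holomorphic_intros)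
  qed
  have oU0: "open (ball 0 \<rho> \<inter> branch_dom r s)" using open_bd[OF s0] by (simp add: open_Int)
  have oU1: "open ({z. R < norm z} \<inter> branch_dom r s)" using open_bd[OF s0] oT1 by (simp add: open_Int)
  have hU0: "\<psi> holomorphic_on (ball 0 \<rho> \<inter> branch_dom r s)" using h\<psi>0 by (rule holomorphic_on_subset) auto
  have hU1: "\<psi> holomorphic_on ({z. R < norm z} \<inter> branch_dom r s)" using h\<psi>1 by (rule holomorphic_on_subset) auto
  have ci0: "f1 contour_integrable_on \<gamma>0" "f2 contour_integrable_on \<gamma>0"
    using contour_integrable_holomorphic_simple[OF _ oU0 g0(1) g0(3)] hf[OF _ hU0] by auto
  have ci1: "f1 contour_integrable_on \<gamma>1" "f2 contour_integrable_on \<gamma>1"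
    using contour_integrable_holomorphic_simple[OF _ oU1 g1(1) g1(3)] hf[OF _ hU1] by auto
  have z0i: "contour_integral \<gamma>0 f2 = 0"
    unfolding f2_def by (rule pterm0[OF s0 rs \<rho> h\<psi>0 odd\<psi>0 disjI1[OF refl] g0])
  have z1i: "contour_integral \<gamma>1 f2 = 0"
    unfolding f2_def by (rule pterm1[OF s0 rs R R0 h\<psi>1 odd\<psi>1 disjI1[OF refl] g1])
  have v0: "contour_integral \<gamma>0 ig = A * contour_integral \<gamma>0 f1"
  proof -
    have "contour_integral \<gamma>0 ig = contour_integral \<gamma>0 (\<lambda>z. A * f1 z + (A * p) * f2 z)"
      by (rule contour_integral_eq) (use int_eq g0(3) pn in auto)
    also have "\<dots> = A * contour_integral \<gamma>0 f1 + (A * p) * contour_integral \<gamma>0 f2"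
      using ci0 by (simp add: contour_integral_add contour_integral_lmul contour_integrable_lmul)
    finally show ?thesis using z0i by simp
  qed
  have v1: "contour_integral \<gamma>1 ig = A * contour_integral \<gamma>1 f1"
  proof -
    have "contour_integral \<gamma>1 ig = contour_integral \<gamma>1 (\<lambda>z. A * f1 z + (A * p) * f2 z)"
      by (rule contour_integral_eq) (use int_eq g1(3) pn in auto)
    also have "\<dots> = A * contour_integral \<gamma>1 f1 + (A * p) * contour_integral \<gamma>1 f2"
      using ci1 by (simp add: contour_integral_add contour_integral_lmul contour_integrable_lmul)
    finally show ?thesis using z1i by simp
  qed
  have "1 / (4 * pi * \<i>) * (contour_integral \<gamma>0 ig + contour_integral \<gamma>1 ig) =
      (- 1 / (8 * pi * \<i>) * cint \<gamma>0 \<gamma>1 f1) * (wbr r s p / (p^2 - r))"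
    unfolding v0 v1 cint_def A_def using pr by (intro alg_end) simp
  then show ?thesis using main unfolding f1_def by simp
qed

lemma spart:
  fixes \<psi> :: "complex \<Rightarrow> complex" and \<rho> R :: real and \<gamma>0 \<gamma>1 :: "real \<Rightarrow> complex" and r s p :: complex
  assumes s0: "s \<noteq> 0" and rs: "norm r < norm s" and \<rho>: "norm (csqrt r) < \<rho>"
    and R: "R < norm (csqrt s)" and R0: "0 < R"
    and h\<psi>0: "\<psi> holomorphic_on ball 0 \<rho>" and h\<psi>1: "\<psi> holomorphic_on {z. R < norm z}"
    and odd\<psi>0: "\<And>z. z \<in> ball 0 \<rho> \<Longrightarrow> \<psi> (- z) = - \<psi> z"
    and odd\<psi>1: "\<And>z. R < norm z \<Longrightarrow> \<psi> (- z) = - \<psi> z"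
    and g0: "valid_path \<gamma>0" "pathfinish \<gamma>0 = pathstart \<gamma>0"
      "path_image \<gamma>0 \<subseteq> ball 0 \<rho> \<inter> branch_dom r s" "\<forall>z\<in>cut0 r. winding_number \<gamma>0 z = 1"
    and g1: "valid_path \<gamma>1" "pathfinish \<gamma>1 = pathstart \<gamma>1"
      "path_image \<gamma>1 \<subseteq> {z. R < norm z} \<inter> branch_dom r s" "\<forall>z\<in>cutinf s. winding_number \<gamma>1 z = 0"
    and pbd: "p \<in> branch_dom r s" and pn: "p \<notin> path_image \<gamma>0 \<union> path_image \<gamma>1"
  shows "((\<lambda>s'. 1 / (4 * pi * \<i>) * cint \<gamma>0 \<gamma>1 (\<lambda>z. \<psi> z * alpha_coeff r s' p z)) has_field_derivative
        (- 1 / (8 * pi * \<i>) * cint \<gamma>0 \<gamma>1 (\<lambda>z. z * \<psi> z / ((z^2 - s) * wbr r s z))) * (wbr r s p / (p^2 - s))) (at s)"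
proof -
  define K where "K = path_image \<gamma>0 \<union> path_image \<gamma>1"
  have cK: "compact K" using g0(1) g1(1)
    by (auto simp: K_def intro!: compact_Un compact_path_image valid_path_imp_path)
  have Kbd: "K \<subseteq> branch_dom r s" using g0(3) g1(3) by (auto simp: K_def)
  have p0: "p \<noteq> 0" using bd_nonzero(1)[OF pbd] .
  define D where "D = {x::complex\<times>complex. snd x \<noteq> 0 \<and> snd x \<noteq> p \<and> fst x \<noteq> 0 \<and> norm r < norm (fst x)}"
  have oD: "open D" unfolding D_def
    by (intro open_Collect_conj open_Collect_neq open_Collect_less continuous_intros)
  define D1 where "D1 = D \<inter> {x. 1 - r / (snd x)^2 \<notin> \<real>\<^sub>\<le>\<^sub>0}"
  have oD1: "open D1" unfolding D1_def
    by (rule open_nonpos_helper[OF oD]) (auto simp: D_def intro!: continuous_intros)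
  define D2 where "D2 = D1 \<inter> {x. 1 - (snd x)^2 / fst x \<notin> \<real>\<^sub>\<le>\<^sub>0}"
  have oD2: "open D2" unfolding D2_def
    by (rule open_nonpos_helper[OF oD1]) (auto simp: D1_def D_def intro!: continuous_intros)
  define G where "G = D2 \<inter> {x. 1 - p^2 / fst x \<notin> \<real>\<^sub>\<le>\<^sub>0}"
  have oG: "open G" unfolding G_def
    by (rule open_nonpos_helper[OF oD2]) (auto simp: D2_def D1_def D_def intro!: continuous_intros)
  have sub: "{s} \<times> K \<subseteq> G"
  proof
    fix x assume "x \<in> {s} \<times> K"
    then obtain z where x: "x = (s, z)" "z \<in> K" by blast
    have zb: "z \<in> branch_dom r s" using x(2) Kbd by blast
    have "z \<noteq> p" using x(2) pn by (auto simp: K_def)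
    then show "x \<in> G" using x bd_nonzero[OF zb] bd_nonzero2[OF zb s0] bd_nonzero2[OF pbd s0] rs s0
      by (simp add: G_def D2_def D1_def D_def)
  qed
  obtain \<delta> S' where \<delta>: "0 < \<delta>" "open S'" "K \<subseteq> S'" "\<And>y z. y \<in> ball s \<delta> \<Longrightarrow> z \<in> S' \<Longrightarrow> (y,z) \<in> G"
    using tube_nbhd[OF cK oG sub] by blast
  have Gd: "z \<noteq> 0 \<and> z \<noteq> p \<and> y \<noteq> 0 \<and> norm r < norm y \<and> 1 - r / z^2 \<notin> \<real>\<^sub>\<le>\<^sub>0 \<and> 1 - z^2 / y \<notin> \<real>\<^sub>\<le>\<^sub>0 \<and> 1 - p^2 / y \<notin> \<real>\<^sub>\<le>\<^sub>0"
    if "y \<in> ball s \<delta>" "z \<in> S'" for y z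
    using \<delta>(4)[OF that] by (simp add: G_def D2_def D1_def D_def)
  have z0: "pathstart \<gamma>0 \<in> S'" using \<delta>(3) by (auto simp: K_def)
  have ys: "y \<noteq> 0" "norm r < norm y" "1 - p^2 / y \<notin> \<real>\<^sub>\<le>\<^sub>0" if "y \<in> ball s \<delta>" for y
    using Gd[OF that z0] by auto
  have bdz: "z \<in> branch_dom r y" if "y \<in> ball s \<delta>" "z \<in> S'" for y z
    using Gd[OF that] cutinf_iff2[of y z] by (auto simp: branch_dom_def cut0_iff2)
  have bdp: "p \<in> branch_dom r y" if "y \<in> ball s \<delta>" for y
    using ys[OF that] cutinf_iff2[of y p] pbd by (auto simp: branch_dom_def)
  define E where "E y z = 1 - z^2 / y" for y z :: complex
  define Ey where "Ey y z = z^2 / y^2" for y z :: complex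
  define k where "k z = p * S1 r p / ((z - p) * (z * S1 r z))" for z
  have Rt_eq: "Rt r y p z = k z * (csqrt (E y p) / csqrt (E y z))" for y z
    unfolding Rt_def k_def E_def S2_def by (simp add: times_divide_times_eq ac_simps)
  have aeq: "\<psi> z * alpha_coeff r y p z = \<psi> z * k z * (csqrt (E y p) / csqrt (E y z))"
    if "y \<in> ball s \<delta>" "z \<in> K" for y z
    using alpha_Rt[OF ys(1)[OF that(1)] ys(2)[OF that(1)] bdp[OF that(1)] bdz[OF that(1)]] that \<delta>(3) Rt_eq by auto
  have rb: "s \<in> ball s \<delta>" using \<delta>(1) by simp
  have gen: "((\<lambda>y. contour_integral \<gamma> (\<lambda>z. \<psi> z * k z * (csqrt (E y p) / csqrt (E y z)))) has_field_derivative
      contour_integral \<gamma> (\<lambda>z. \<psi> z * k z * ((csqrt (E s p) / csqrt (E s z)) *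
          (Ey s p / (2 * E s p) - Ey s z / (2 * E s z))))) (at s)"
    if T: "open T" "T \<subseteq> S'" "valid_path \<gamma>" "path_image \<gamma> \<subseteq> T" "\<psi> holomorphic_on T" for \<gamma> T
  proof (rule GEN[OF T(1) T(3) T(4) \<delta>(1) T(5)])
    have kz: "z \<noteq> 0 \<and> z \<noteq> p \<and> 1 - r / z^2 \<notin> \<real>\<^sub>\<le>\<^sub>0" if "z \<in> T" for z
      using Gd[OF rb] T(2) that by blast
    have kz2: "csqrt (1 - r / z^2) \<noteq> 0" if "z \<in> T" for z
    proof
      assume "csqrt (1 - r / z^2) = 0"
      then have h: "1 - r / z^2 = 0" by simp
      show False using kz[OF that] unfolding h by simp
    qed
    have "(\<lambda>z. p * csqrt (1 - r / p^2) / ((z - p) * (z * csqrt (1 - r / z^2)))) holomorphic_on T"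
      using kz kz2 by (intro holomorphic_intros) auto
    then show "k holomorphic_on T" unfolding k_def S1_def .
    show "E y z \<notin> \<real>\<^sub>\<le>\<^sub>0" if "y \<in> ball s \<delta>" "z \<in> T" for y z
      using Gd[OF that(1)] T(2) that(2) by (auto simp: E_def)
    show "E y p \<notin> \<real>\<^sub>\<le>\<^sub>0" if "y \<in> ball s \<delta>" for y
      using ys(3)[OF that] by (simp add: E_def)
    have dE: "((\<lambda>y. E y z) has_field_derivative Ey y z) (at y)" if y: "y \<in> ball s \<delta>" for y z
    proof -
      have y0: "y \<noteq> 0" using ys(1)[OF y] .
      have "((\<lambda>y. z^2 / y) has_field_derivative (0 * y - z^2 * 1) / (y * y)) (at y)"
        by (rule DERIV_divide[OF DERIV_const DERIV_ident]) (use y0 in simp)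
      then have "((\<lambda>y. 1 - z^2 / y) has_field_derivative 0 - (0 * y - z^2 * 1) / (y * y)) (at y)"
        by (intro DERIV_diff DERIV_const)
      then show ?thesis by (simp add: E_def Ey_def power2_eq_square)
    qed
    show "((\<lambda>y. E y z) has_field_derivative Ey y z) (at y)" if "y \<in> ball s \<delta>" for y z by (rule dE[OF that])
    show "((\<lambda>y. E y p) has_field_derivative Ey y p) (at y)" if "y \<in> ball s \<delta>" for y by (rule dE[OF that])
    have nz: "z \<noteq> 0" if "z \<in> T" for z using Gd[OF rb] T(2) that by blast
    show "E y holomorphic_on T" if "y \<in> ball s \<delta>" for y
      unfolding E_def using ys(1)[OF that] by (intro holomorphic_intros) auto
    show "Ey s holomorphic_on T"
      unfolding Ey_def using s0 by (intro holomorphic_intros) auto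
    have nz2: "fst x \<noteq> 0" if "x \<in> ball s \<delta> \<times> T" for x using ys(1) that by (auto simp: mem_Times_iff)
    show "continuous_on (ball s \<delta> \<times> T) (\<lambda>x. E (fst x) (snd x))"
      unfolding E_def using nz2 by (intro continuous_intros) auto
    show "continuous_on (ball s \<delta> \<times> T) (\<lambda>x. Ey (fst x) (snd x))"
      unfolding Ey_def using nz2 by (intro continuous_intros) auto
    show "continuous_on (ball s \<delta>) (\<lambda>y. E y p)"
      unfolding E_def using ys(1) by (intro continuous_intros) auto
    show "continuous_on (ball s \<delta>) (\<lambda>y. Ey y p)"
      unfolding Ey_def using ys(1) by (intro continuous_intros) auto
  qed
  define T0 where "T0 = S' \<inter> ball 0 \<rho>"
  define T1 where "T1 = S' \<inter> {z. R < norm z}"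
  have oT1: "open {z::complex. R < norm z}"
    by (simp add: open_Collect_less continuous_on_norm_id continuous_intros)
  have oT0: "open T0" unfolding T0_def using \<delta>(2) by (simp add: open_Int)
  have oT1': "open T1" unfolding T1_def using \<delta>(2) oT1 by (simp add: open_Int)
  have i0: "path_image \<gamma>0 \<subseteq> T0" using \<delta>(3) g0(3) by (auto simp: T0_def K_def)
  have i1: "path_image \<gamma>1 \<subseteq> T1" using \<delta>(3) g1(3) by (auto simp: T1_def K_def)
  have d0: "((\<lambda>y. contour_integral \<gamma>0 (\<lambda>z. \<psi> z * k z * (csqrt (E y p) / csqrt (E y z)))) has_field_derivative
      contour_integral \<gamma>0 (\<lambda>z. \<psi> z * k z * ((csqrt (E s p) / csqrt (E s z)) *
          (Ey s p / (2 * E s p) - Ey s z / (2 * E s z))))) (at s)"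
    by (rule gen[OF oT0 _ g0(1) i0]) (auto simp: T0_def intro: holomorphic_on_subset[OF h\<psi>0])
  have d1: "((\<lambda>y. contour_integral \<gamma>1 (\<lambda>z. \<psi> z * k z * (csqrt (E y p) / csqrt (E y z)))) has_field_derivative
      contour_integral \<gamma>1 (\<lambda>z. \<psi> z * k z * ((csqrt (E s p) / csqrt (E s z)) *
          (Ey s p / (2 * E s p) - Ey s z / (2 * E s z))))) (at s)"
    by (rule gen[OF oT1' _ g1(1) i1]) (auto simp: T1_def intro: holomorphic_on_subset[OF h\<psi>1])
  define F where "F y = 1 / (4 * pi * \<i>) * (contour_integral \<gamma>0 (\<lambda>z. \<psi> z * k z * (csqrt (E y p) / csqrt (E y z)))
      + contour_integral \<gamma>1 (\<lambda>z. \<psi> z * k z * (csqrt (E y p) / csqrt (E y z))))" for y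
  define ig where "ig z = \<psi> z * k z * ((csqrt (E s p) / csqrt (E s z)) *
          (Ey s p / (2 * E s p) - Ey s z / (2 * E s z)))" for z
  have dF: "(F has_field_derivative 1 / (4 * pi * \<i>) * (contour_integral \<gamma>0 ig + contour_integral \<gamma>1 ig)) (at s)"
    unfolding F_def ig_def by (intro DERIV_cmult DERIV_add d0 d1)
  have eqF: "F y = 1 / (4 * pi * \<i>) * cint \<gamma>0 \<gamma>1 (\<lambda>z. \<psi> z * alpha_coeff r y p z)" if "y \<in> ball s \<delta>" for y
  proof -
    have "contour_integral \<gamma>0 (\<lambda>z. \<psi> z * alpha_coeff r y p z) = contour_integral \<gamma>0 (\<lambda>z. \<psi> z * k z * (csqrt (E y p) / csqrt (E y z)))"
      by (rule contour_integral_eq) (use aeq[OF that] in \<open>auto simp: K_def\<close>)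
    moreover have "contour_integral \<gamma>1 (\<lambda>z. \<psi> z * alpha_coeff r y p z) = contour_integral \<gamma>1 (\<lambda>z. \<psi> z * k z * (csqrt (E y p) / csqrt (E y z)))"
      by (rule contour_integral_eq) (use aeq[OF that] in \<open>auto simp: K_def\<close>)
    ultimately show ?thesis by (simp add: F_def cint_def)
  qed
  have main: "((\<lambda>s'. 1 / (4 * pi * \<i>) * cint \<gamma>0 \<gamma>1 (\<lambda>z. \<psi> z * alpha_coeff r s' p z)) has_field_derivative
      1 / (4 * pi * \<i>) * (contour_integral \<gamma>0 ig + contour_integral \<gamma>1 ig)) (at s)"
    by (rule has_field_derivative_transform_within_open[OF dF open_ball rb eqF])
  define A where "A = - wbr r s p / (2 * (p^2 - s))"
  define f1 where "f1 z = z * \<psi> z / ((z^2 - s) * wbr r s z)" for z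
  define f2 where "f2 z = \<psi> z / ((z^2 - s) * wbr r s z)" for z
  have pr: "p^2 \<noteq> s" using bd_F_nonzero[OF pbd s0] by simp
  have int_eq: "ig z = A * f1 z + (A * p) * f2 z" if zb: "z \<in> branch_dom r s" and zp: "z \<noteq> p" for z
  proof -
    have "k z * (csqrt (E s p) / csqrt (E s z)) = wbr r s p / ((z - p) * wbr r s z)"
      using Rt_eq[of s z] alpha_Rt[OF s0 rs pbd zb] by (simp add: alpha_coeff_def)
    then have "ig z = \<psi> z * (wbr r s p / ((z - p) * wbr r s z)) * (Ey s p / (2 * E s p) - Ey s z / (2 * E s z))"
      unfolding ig_def by (metis (no_types, lifting) mult.assoc)
    also have "\<dots> = A * f1 z + (A * p) * f2 z"
      unfolding A_def f1_def f2_def E_def Ey_def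
      by (rule final_s) (use zp wbr_nonzero[OF s0 zb] bd_F_nonzero[OF zb s0] s0 pr in auto)
    finally show ?thesis .
  qed
  have hf: "f1 holomorphic_on U" "f2 holomorphic_on U"
    if "U \<subseteq> branch_dom r s" "\<psi> holomorphic_on U" for U
  proof -
    have "wbr r s holomorphic_on U" using wbr_hol[OF s0] that(1) by (rule holomorphic_on_subset)
    moreover have "(z^2 - s) * wbr r s z \<noteq> 0" if "z \<in> U" for z
    proof -
      have zb: "z \<in> branch_dom r s" using that \<open>U \<subseteq> _\<close> by blast
      show ?thesis using bd_F_nonzero(2)[OF zb s0] wbr_nonzero[OF s0 zb] by simp
    qed
    ultimately show "f1 holomorphic_on U" "f2 holomorphic_on U"
      unfolding f1_def f2_def using that(2) by (auto intro!: holomorphic_intros)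
  qed
  have oU0: "open (ball 0 \<rho> \<inter> branch_dom r s)" using open_bd[OF s0] by (simp add: open_Int)
  have oU1: "open ({z. R < norm z} \<inter> branch_dom r s)" using open_bd[OF s0] oT1 by (simp add: open_Int)
  have hU0: "\<psi> holomorphic_on (ball 0 \<rho> \<inter> branch_dom r s)" using h\<psi>0 by (rule holomorphic_on_subset) auto
  have hU1: "\<psi> holomorphic_on ({z. R < norm z} \<inter> branch_dom r s)" using h\<psi>1 by (rule holomorphic_on_subset) auto
  have ci0: "f1 contour_integrable_on \<gamma>0" "f2 contour_integrable_on \<gamma>0"
    using contour_integrable_holomorphic_simple[OF _ oU0 g0(1) g0(3)] hf[OF _ hU0] by auto
  have ci1: "f1 contour_integrable_on \<gamma>1" "f2 contour_integrable_on \<gamma>1"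
    using contour_integrable_holomorphic_simple[OF _ oU1 g1(1) g1(3)] hf[OF _ hU1] by auto
  have z0i: "contour_integral \<gamma>0 f2 = 0"
    unfolding f2_def by (rule pterm0[OF s0 rs \<rho> h\<psi>0 odd\<psi>0 disjI2[OF refl] g0])
  have z1i: "contour_integral \<gamma>1 f2 = 0"
    unfolding f2_def by (rule pterm1[OF s0 rs R R0 h\<psi>1 odd\<psi>1 disjI2[OF refl] g1])
  have v0: "contour_integral \<gamma>0 ig = A * contour_integral \<gamma>0 f1"
  proof -
    have "contour_integral \<gamma>0 ig = contour_integral \<gamma>0 (\<lambda>z. A * f1 z + (A * p) * f2 z)"
      by (rule contour_integral_eq) (use int_eq g0(3) pn in auto)
    also have "\<dots> = A * contour_integral \<gamma>0 f1 + (A * p) * contour_integral \<gamma>0 f2"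
      using ci0 by (simp add: contour_integral_add contour_integral_lmul contour_integrable_lmul)
    finally show ?thesis using z0i by simp
  qed
  have v1: "contour_integral \<gamma>1 ig = A * contour_integral \<gamma>1 f1"
  proof -
    have "contour_integral \<gamma>1 ig = contour_integral \<gamma>1 (\<lambda>z. A * f1 z + (A * p) * f2 z)"
      by (rule contour_integral_eq) (use int_eq g1(3) pn in auto)
    also have "\<dots> = A * contour_integral \<gamma>1 f1 + (A * p) * contour_integral \<gamma>1 f2"
      using ci1 by (simp add: contour_integral_add contour_integral_lmul contour_integrable_lmul)
    finally show ?thesis using z1i by simp
  qed
  have "1 / (4 * pi * \<i>) * (contour_integral \<gamma>0 ig + contour_integral \<gamma>1 ig) =
      (- 1 / (8 * pi * \<i>) * cint \<gamma>0 \<gamma>1 f1) * (wbr r s p / (p^2 - s))"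
    unfolding v0 v1 cint_def A_def using pr by (intro alg_end) simp
  then show ?thesis using main unfolding f1_def by simp
qed

theorem lemma4p3:
  fixes \<phi> :: "complex \<Rightarrow> complex \<times> complex"
    and \<rho> R :: real
    and \<gamma>0 \<gamma>1 :: "real \<Rightarrow> complex"
    and r s p :: complex
  assumes rho_pos: "0 < \<rho>" and R_pos: "0 < R"
    \<comment> \<open>N_0 = ball 0 rho, N_infinity = {z. R < norm z} plus infinity\<close>
    and phi_hol0: "\<forall>\<pi>\<in>{fst, snd}. (\<lambda>z. \<pi> (\<phi> z)) holomorphic_on ball 0 \<rho>"
    and phi_holinf: "\<forall>\<pi>\<in>{fst, snd}. (\<lambda>z. \<pi> (\<phi> z)) holomorphic_on {z. R < norm z}"
    and phi_hol_at_inf: "\<forall>\<pi>\<in>{fst, snd}. \<exists>c.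
           (\<lambda>u. if u = 0 then c else \<pi> (\<phi> (inverse u))) holomorphic_on ball 0 (inverse R)"
    and phi_odd0: "\<forall>z\<in>ball 0 \<rho>. \<phi> (- z) = - \<phi> z"
    and phi_oddinf: "\<forall>z. R < norm z \<longrightarrow> \<phi> (- z) = - \<phi> z"
    and r_ne: "r \<noteq> 0" and rs_ne: "r \<noteq> s"
    and sqrt_r_in: "norm (csqrt r) < \<rho>"
    and sqrt_s_in: "R < norm (csqrt s)"
    and r_near0_s_nearinf: "norm r < norm s"
    \<comment> \<open>the loop in N_0 encircling the cut from sqrt r to - sqrt r\<close>
    and g0_valid: "valid_path \<gamma>0" and g0_closed: "pathfinish \<gamma>0 = pathstart \<gamma>0"
    and g0_image: "path_image \<gamma>0 \<subseteq> ball 0 \<rho> \<inter> branch_dom r s"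
    and g0_encircles: "\<forall>z\<in>cut0 r. winding_number \<gamma>0 z = 1"
    \<comment> \<open>the loop in N_infinity encircling the cut from sqrt s to - sqrt s through infinity
        (positively oriented as seen from infinity, i.e. clockwise in the z-plane)\<close>
    and g1_valid: "valid_path \<gamma>1" and g1_closed: "pathfinish \<gamma>1 = pathstart \<gamma>1"
    and g1_image: "path_image \<gamma>1 \<subseteq> {z. R < norm z} \<inter> branch_dom r s"
    and g1_encircles: "\<forall>z\<in>cutinf s. winding_number \<gamma>1 z = 0"
    and g1_around0: "winding_number \<gamma>1 0 = -1"
    \<comment> \<open>p lies in the region outside both loops\<close>
    and p_notin: "p \<notin> path_image \<gamma>0 \<union> path_image \<gamma>1"
    and p_out0: "winding_number \<gamma>0 p = 0"
    and p_out1: "winding_number \<gamma>1 p = -1"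
  shows "\<forall>\<pi>\<in>{fst, snd}.
      ((\<lambda>r'. \<pi> (f_rs \<phi> \<gamma>0 \<gamma>1 r' s p)) has_field_derivative
          \<pi> (A_coef \<phi> \<gamma>0 \<gamma>1 r s) * (wbr r s p / (p^2 - r))) (at r) \<and>
      ((\<lambda>s'. \<pi> (f_rs \<phi> \<gamma>0 \<gamma>1 r s' p)) has_field_derivative
          \<pi> (B_coef \<phi> \<gamma>0 \<gamma>1 r s) * (wbr r s p / (p^2 - s))) (at s)"
proof -
  have s0: "s \<noteq> 0" using r_near0_s_nearinf by auto
  have pbd: "p \<in> branch_dom r s"
  proof -
    have "p \<notin> cut0 r" using g0_encircles p_out0 by auto
    moreover have "p \<notin> cutinf s" using g1_encircles p_out1 by auto
    ultimately show ?thesis by (simp add: branch_dom_def)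
  qed
  show ?thesis
  proof (intro ballI conjI)
    fix \<pi> :: "complex \<times> complex \<Rightarrow> complex" assume \<pi>: "\<pi> \<in> {fst, snd}"
    define \<psi> where "\<psi> z = \<pi> (\<phi> z)" for z
    have \<psi>eq: "\<psi> = (\<lambda>z. \<pi> (\<phi> z))" by (simp add: \<psi>_def fun_eq_iff)
    have h\<psi>0: "\<psi> holomorphic_on ball 0 \<rho>" using phi_hol0 \<pi> unfolding \<psi>eq by blast
    have h\<psi>1: "\<psi> holomorphic_on {z. R < norm z}" using phi_holinf \<pi> unfolding \<psi>eq by blast
    have odd\<psi>0: "\<psi> (- z) = - \<psi> z" if "z \<in> ball 0 \<rho>" for z
      using phi_odd0 \<pi> that by (auto simp: \<psi>_def)
    have odd\<psi>1: "\<psi> (- z) = - \<psi> z" if "R < norm z" for z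
      using phi_oddinf \<pi> that by (auto simp: \<psi>_def)
    have fr: "\<pi> (f_rs \<phi> \<gamma>0 \<gamma>1 r' s' p) = 1 / (4 * pi * \<i>) * cint \<gamma>0 \<gamma>1 (\<lambda>z. \<psi> z * alpha_coeff r' s' p z)" for r' s'
      using \<pi> by (auto simp: f_rs_def \<psi>_def)
    have Ar: "\<pi> (A_coef \<phi> \<gamma>0 \<gamma>1 r s) = - 1 / (8 * pi * \<i>) * cint \<gamma>0 \<gamma>1 (\<lambda>z. z * \<psi> z / ((z^2 - r) * wbr r s z))"
      using \<pi> by (auto simp: A_coef_def \<psi>_def)
    have Br: "\<pi> (B_coef \<phi> \<gamma>0 \<gamma>1 r s) = - 1 / (8 * pi * \<i>) * cint \<gamma>0 \<gamma>1 (\<lambda>z. z * \<psi> z / ((z^2 - s) * wbr r s z))"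
      using \<pi> by (auto simp: B_coef_def \<psi>_def)
    show "((\<lambda>r'. \<pi> (f_rs \<phi> \<gamma>0 \<gamma>1 r' s p)) has_field_derivative
          \<pi> (A_coef \<phi> \<gamma>0 \<gamma>1 r s) * (wbr r s p / (p^2 - r))) (at r)"
      unfolding fr Ar
      by (rule rpart[OF s0 r_near0_s_nearinf sqrt_r_in sqrt_s_in R_pos h\<psi>0 h\<psi>1 odd\<psi>0 odd\<psi>1
            g0_valid g0_closed g0_image g0_encircles g1_valid g1_closed g1_image g1_encircles pbd p_notin])
    show "((\<lambda>s'. \<pi> (f_rs \<phi> \<gamma>0 \<gamma>1 r s' p)) has_field_derivative
          \<pi> (B_coef \<phi> \<gamma>0 \<gamma>1 r s) * (wbr r s p / (p^2 - s))) (at s)"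
      unfolding fr Br
      by (rule spart[OF s0 r_near0_s_nearinf sqrt_r_in sqrt_s_in R_pos h\<psi>0 h\<psi>1 odd\<psi>0 odd\<psi>1
            g0_valid g0_closed g0_image g0_encircles g1_valid g1_closed g1_image g1_encircles pbd p_notin])
  qed
qed

end
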